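(* With $n=3$, $m=1$ and constant coefficients, consider the second order system $R_2$: $\Phi^3\equiv y_{33}=0$, $\Phi^2\equiv y_{23}-y_{11}=0$, $\Phi^1\equiv y_{22}=0$. Then $R_2$ is formally integrable; its symbols $g_2,g_3$ are not involutive; $g_4=0$; $\dim g_3=1$; the map $\delta:\wedge^2T^*\otimes g_3\to\wedge^3T^*\otimes g_2$ is an isomorphism between $3$-dimensional spaces, so $g_3$ is $2$-acyclic. With the commuting operators $P=d_{22}$, $Q=d_{23}-d_{11}$, $R=d_{33}$, the compatibility conditions of $y\mapsto(\Phi^1,\Phi^2,\Phi^3)=(Py,Qy,Ry)$ are generated by the three second order conditions $\Psi^3\equiv P\Phi^2-Q\Phi^1=0$, $\Psi^2\equiv R\Phi^1-P\Phi^3=0$, $\Psi^1\equiv Q\Phi^3-R\Phi^2=0$, whose compatibility conditions are generated by the single second order condition $P\Psi^1+Q\Psi^2+R\Psi^3=0$; this yields a formally exact sequence $0\to\Theta\to1\to3\to3\to1\to0$ (numbers of unknowns/equations). Moreover the symbol $h_2=\mathrm{im}\,\sigma_2(\Phi)$ is not $2$-acyclic while its prolongation $h_3$ is $2$-acyclic.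
   Context: $g_{2+r}$ denotes the symbol of order $2+r$: the space of $v_\mu$, $|\mu|=2+r$, satisfying $v_{33+\nu}=0$, $v_{23+\nu}-v_{11+\nu}=0$, $v_{22+\nu}=0$ for $|\nu|=r$. The Spencer map is $(\delta\omega)_\mu=dx^i\wedge\omega_{\mu+1_i}$; $s$-acyclicity means vanishing of the $\delta$-cohomology at $\wedge^jT^*\otimes(\cdot)$ for $1\le j\le s$ and all prolongations. $h_{t}=\mathrm{im}(S_{2+t}T^*\to S_tT^*\otimes\mathbb{R}^3)$ is the image of the symbol map of $\Phi$. A differential sequence is formally exact if each operator generates the compatibility conditions of the preceding one. *)

theory Defs
  imports "HOL-Analysis.Analysis" "HOL-Library.Poly_Mapping" "HOL-Library.Product_Plus" "HOL-Library.Function_Algebras"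
begin

text \<open>A multi-index mu = (mu1, mu2, mu3); the variable x^i (i = 1,2,3) corresponds to
  the index i-1 in {0,1,2}.\<close>

type_synonym mi = "nat \<times> nat \<times> nat"

fun mdeg :: "mi \<Rightarrow> nat" where
  "mdeg (a, b, c) = a + b + c"

definition unit_mi :: "nat \<Rightarrow> mi" where
  "unit_mi i = (if i = 0 then (1, 0, 0) else if i = 1 then (0, 1, 0) else (0, 0, 1))"

text \<open>The commutative ring D = R[d_1,d_2,d_3] of linear differential operators with constant
  coefficients, as polynomials in the formal derivations; d_mu is the monomial with exponent mu.\<close>

type_synonym D = "mi \<Rightarrow>\<^sub>0 real"

definition dop :: "mi \<Rightarrow> D" where
  "dop \<mu> = Poly_Mapping.single \<mu> 1"

text \<open>An operator matrix with p rows (equations) and m columns (unknowns) is a list of p rows,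
  each a list of m elements of D.\<close>

definition is_matrix :: "nat \<Rightarrow> nat \<Rightarrow> D list list \<Rightarrow> bool" where
  "is_matrix p m A \<longleftrightarrow> length A = p \<and> (\<forall>row \<in> set A. length row = m)"

definition rowmul :: "D list \<Rightarrow> D list list \<Rightarrow> nat \<Rightarrow> D list" where
  "rowmul l B n = map (\<lambda>k. \<Sum>i<length B. l ! i * (B ! i ! k)) [0..<n]"

definition generates_cc :: "D list list \<Rightarrow> D list list \<Rightarrow> nat \<Rightarrow> bool" where
  "generates_cc B A m \<longleftrightarrow>
     (\<forall>b \<in> set B. rowmul b A m = replicate m 0) \<and>
     (\<forall>c. length c = length A \<and> rowmul c A m = replicate m 0 \<longrightarrow>
          (\<exists>l. length l = length B \<and> c = rowmul l B (length A)))"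

text \<open>The
  trailing "-> 0" is encoded by a final empty (0 x k) operator matrix.\<close>

definition formally_exact :: "nat list \<Rightarrow> D list list list \<Rightarrow> bool" where
  "formally_exact dims ops \<longleftrightarrow>
     length dims = Suc (length ops) \<and>
     (\<forall>i < length ops. is_matrix (dims ! Suc i) (dims ! i) (ops ! i)) \<and>
     (\<forall>i. Suc i < length ops \<longrightarrow> generates_cc (ops ! Suc i) (ops ! i) (dims ! i))"

text \<open>A (finite) jet / family of Taylor coefficients v(mu, k) of m unknowns y^k (k < m).\<close>

type_synonym jet = "mi \<times> nat \<Rightarrow> real"

text \<open>J_k(E), E = R^m: jets of order <= k;  S_k T* (x) E: homogeneous of order k.\<close>

definition Jsp :: "nat \<Rightarrow> nat \<Rightarrow> jet set" where
  "Jsp m k = {v. \<forall>\<mu> c. \<not> (mdeg \<mu> \<le> k \<and> c < m) \<longrightarrow> v (\<mu>, c) = 0}"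

definition Ssp :: "nat \<Rightarrow> nat \<Rightarrow> jet set" where
  "Ssp m k = {v. \<forall>\<mu> c. \<not> (mdeg \<mu> = k \<and> c < m) \<longrightarrow> v (\<mu>, c) = 0}"

text \<open>Formal action of the operator matrix A on jets: the nu-th derivative of the tau-th
  equation, (d_nu (A y)^tau) evaluated on the jet v.\<close>

definition opapp :: "D list list \<Rightarrow> jet \<Rightarrow> jet" where
  "opapp A v = (\<lambda>(\<nu>, \<tau>). if \<tau> < length A then
      (\<Sum>k<length (A ! \<tau>). \<Sum>\<alpha> \<in> Poly_Mapping.keys (A ! \<tau> ! k). Poly_Mapping.lookup (A ! \<tau> ! k) \<alpha> * v (\<alpha> + \<nu>, k))
      else 0)"

text \<open>The r-th prolongation R_{q+r} of the order-q system R_q defined by A (m unknowns).\<close>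

definition Rsys :: "D list list \<Rightarrow> nat \<Rightarrow> nat \<Rightarrow> nat \<Rightarrow> jet set" where
  "Rsys A m q r = {v \<in> Jsp m (q + r). \<forall>\<nu> \<tau>. mdeg \<nu> \<le> r \<and> \<tau> < length A \<longrightarrow> opapp A v (\<nu>, \<tau>) = 0}"

definition trunc :: "nat \<Rightarrow> jet \<Rightarrow> jet" where
  "trunc k v = (\<lambda>(\<mu>, c). if mdeg \<mu> \<le> k then v (\<mu>, c) else 0)"

definition formally_integrable :: "D list list \<Rightarrow> nat \<Rightarrow> nat \<Rightarrow> bool" where
  "formally_integrable A m q \<longleftrightarrow> (\<forall>r. trunc (q + r) ` Rsys A m q (Suc r) = Rsys A m q r)"

definition symb :: "D list list \<Rightarrow> nat \<Rightarrow> nat \<Rightarrow> nat \<Rightarrow> jet set" where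
  "symb A m q r = Rsys A m q r \<inter> Ssp m (q + r)"

text \<open>The symbol map sigma_{q+t}(A): S_{q+t} T* (x) R^m -> S_t T* (x) R^p (p = number of rows)
  and its image h_t.\<close>

definition symbol_map :: "D list list \<Rightarrow> nat \<Rightarrow> jet \<Rightarrow> jet" where
  "symbol_map A t v = (\<lambda>(\<nu>, \<tau>). if mdeg \<nu> = t then opapp A v (\<nu>, \<tau>) else 0)"

definition hsp :: "D list list \<Rightarrow> nat \<Rightarrow> nat \<Rightarrow> nat \<Rightarrow> jet set" where
  "hsp A m q t = symbol_map A t ` Ssp m (q + t)"

definition shiftj :: "mi \<Rightarrow> jet \<Rightarrow> jet" where
  "shiftj \<nu> v = (\<lambda>(\<mu>, c). v (\<mu> + \<nu>, c))"

definition prol :: "nat \<Rightarrow> nat \<Rightarrow> jet set \<Rightarrow> nat \<Rightarrow> jet set" where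
  "prol m q G r = {v \<in> Ssp m (q + r). \<forall>\<nu>. mdeg \<nu> = r \<longrightarrow> shiftj \<nu> v \<in> G}"

text \<open>Elements of wedge^j T* (x) V: functions of (I, mu, c), I a j-subset of {0,1,2}.\<close>

type_synonym form = "nat set \<times> mi \<times> nat \<Rightarrow> real"

definition Forms :: "nat \<Rightarrow> jet set \<Rightarrow> form set" where
  "Forms j V = {\<omega>. \<forall>I. (I \<subseteq> {0, 1, 2} \<and> card I = j \<longrightarrow> (\<lambda>(\<mu>, c). \<omega> (I, \<mu>, c)) \<in> V) \<and>
                         (\<not> (I \<subseteq> {0, 1, 2} \<and> card I = j) \<longrightarrow> (\<forall>\<mu> c. \<omega> (I, \<mu>, c) = 0))}"

definition spencer :: "form \<Rightarrow> form" where
  "spencer \<omega> = (\<lambda>(I, \<mu>, c). if I \<subseteq> {0, 1, 2} then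
      (\<Sum>i\<in>I. (-1) ^ card {l \<in> I. l < i} * \<omega> (I - {i}, \<mu> + unit_mi i, c)) else 0)"

definition delta_exact_at :: "nat \<Rightarrow> jet set \<Rightarrow> jet set \<Rightarrow> bool" where
  "delta_exact_at j Gin Gmid \<longleftrightarrow>
     (\<forall>\<omega> \<in> Forms j Gmid. spencer \<omega> = 0 \<longrightarrow> (\<exists>\<theta> \<in> Forms (j - 1) Gin. spencer \<theta> = \<omega>))"

definition acyclic :: "nat \<Rightarrow> nat \<Rightarrow> nat \<Rightarrow> jet set \<Rightarrow> bool" where
  "acyclic s m q G \<longleftrightarrow>
     (\<forall>r j. 1 \<le> j \<and> j \<le> s \<longrightarrow> delta_exact_at j (prol m q G (Suc r)) (prol m q G r))"

definition involutive :: "nat \<Rightarrow> nat \<Rightarrow> jet set \<Rightarrow> bool" where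
  "involutive m q G \<longleftrightarrow> acyclic 3 m q G"

definition fdim :: "('a \<Rightarrow> real) set \<Rightarrow> nat" where
  "fdim S = vector_space.dim (\<lambda>c f x. c * f x) S"

definition opP :: D where "opP = dop (0, 2, 0)"
definition opQ :: D where "opQ = dop (0, 1, 1) - dop (2, 0, 0)"
definition opR :: D where "opR = dop (0, 0, 2)"

end

theory Submission
  imports Defs
begin


lemma plus3[simp]: "((a::nat),(b::nat),(c::nat)) + (d,e,f) = (a+d,b+e,c+f)"
  by (simp add: plus_prod_def)
lemma zero3[simp]: "(0::mi) = (0,0,0)" by (simp add: zero_prod_def)

lemma unit_mi_simps[simp]: "unit_mi 0 = (1,0,0)" "unit_mi 1 = (0,1,0)" "unit_mi 2 = (0,0,1)"
  by (simp_all add: unit_mi_def)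

definition mk0 :: "jet \<Rightarrow> form" where
  "mk0 a = (\<lambda>(I,\<mu>,c). if I = {} then a (\<mu>,c) else 0)"
definition mk1 :: "jet \<Rightarrow> jet \<Rightarrow> jet \<Rightarrow> form" where
  "mk1 a0 a1 a2 = (\<lambda>(I,\<mu>,c). if I = {0} then a0 (\<mu>,c) else if I = {1} then a1 (\<mu>,c)
      else if I = {2} then a2 (\<mu>,c) else 0)"
definition mk2 :: "jet \<Rightarrow> jet \<Rightarrow> jet \<Rightarrow> form" where
  "mk2 a0 a1 a2 = (\<lambda>(I,\<mu>,c). if I = {0,1} then a0 (\<mu>,c) else if I = {0,2} then a1 (\<mu>,c)
      else if I = {1,2} then a2 (\<mu>,c) else 0)"
definition mk3 :: "jet \<Rightarrow> form" where
  "mk3 a = (\<lambda>(I,\<mu>,c). if I = {0,1,2} then a (\<mu>,c) else 0)"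

definition comp :: "form \<Rightarrow> nat set \<Rightarrow> jet" where
  "comp \<omega> I = (\<lambda>(\<mu>,c). \<omega> (I,\<mu>,c))"

abbreviation s0 where "s0 \<equiv> shiftj (1,0,0)"
abbreviation s1 where "s1 \<equiv> shiftj (0,1,0)"
abbreviation s2 where "s2 \<equiv> shiftj (0,0,1)"

lemma filt_lt: "{l \<in> I. l < (i::nat)} = I \<inter> {..<i}" by auto

lemma subsets012:
  assumes "I \<subseteq> {0,1,2::nat}"
  shows "I = {} \<or> I = {0} \<or> I = {1} \<or> I = {2} \<or> I = {0,1} \<or> I = {0,2} \<or> I = {1,2} \<or> I = {0,1,2}"
proof -
  have e: "I = (if 0 \<in> I then {0} else {}) \<union> ((if 1 \<in> I then {1} else {}) \<union> (if 2 \<in> I then {2} else {}))"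
    using assms by auto
  show ?thesis
  proof (cases "0 \<in> I"; cases "1 \<in> I"; cases "2 \<in> I")
    assume "0 \<in> I" "1 \<in> I" "2 \<in> I" then have "I = {0,1,2}" using e by auto
    then show ?thesis by blast
  next
    assume "0 \<in> I" "1 \<in> I" "2 \<notin> I" then have "I = {0,1}" using e by auto
    then show ?thesis by blast
  next
    assume "0 \<in> I" "1 \<notin> I" "2 \<in> I" then have "I = {0,2}" using e by auto
    then show ?thesis by blast
  next
    assume "0 \<in> I" "1 \<notin> I" "2 \<notin> I" then have "I = {0}" using e by auto
    then show ?thesis by blast
  next
    assume "0 \<notin> I" "1 \<in> I" "2 \<in> I" then have "I = {1,2}" using e by auto
    then show ?thesis by blast
  next
    assume "0 \<notin> I" "1 \<in> I" "2 \<notin> I" then have "I = {1}" using e by auto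
    then show ?thesis by blast
  next
    assume "0 \<notin> I" "1 \<notin> I" "2 \<in> I" then have "I = {2}" using e by auto
    then show ?thesis by blast
  next
    assume "0 \<notin> I" "1 \<notin> I" "2 \<notin> I" then have "I = {}" using e by auto
    then show ?thesis by blast
  qed
qed


lemma spencer_at0[simp]: "spencer \<omega> ({},\<mu>,c) = 0"
  apply (simp only: spencer_def prod.case filt_lt)
  apply (simp add: Int_insert_left insert_Diff_if unit_mi_def)
  done

lemma spencer_at1[simp]: "spencer \<omega> ({0},\<mu>,c) = \<omega> ({},\<mu>+(1,0,0),c)"
  apply (simp only: spencer_def prod.case filt_lt)
  apply (simp add: Int_insert_left insert_Diff_if unit_mi_def)
  done

lemma spencer_at2[simp]: "spencer \<omega> ({1},\<mu>,c) = \<omega> ({},\<mu>+(0,1,0),c)"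
  apply (simp only: spencer_def prod.case filt_lt)
  apply (simp add: Int_insert_left insert_Diff_if unit_mi_def)
  done

lemma spencer_at3[simp]: "spencer \<omega> ({2},\<mu>,c) = \<omega> ({},\<mu>+(0,0,1),c)"
  apply (simp only: spencer_def prod.case filt_lt)
  apply (simp add: Int_insert_left insert_Diff_if unit_mi_def)
  done

lemma spencer_at4[simp]: "spencer \<omega> ({0,1},\<mu>,c) = \<omega> ({1},\<mu>+(1,0,0),c) - \<omega> ({0},\<mu>+(0,1,0),c)"
  apply (simp only: spencer_def prod.case filt_lt)
  apply (simp add: Int_insert_left insert_Diff_if unit_mi_def)
  done

lemma spencer_at5[simp]: "spencer \<omega> ({0,2},\<mu>,c) = \<omega> ({2},\<mu>+(1,0,0),c) - \<omega> ({0},\<mu>+(0,0,1),c)"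
  apply (simp only: spencer_def prod.case filt_lt)
  apply (simp add: Int_insert_left insert_Diff_if unit_mi_def)
  done

lemma spencer_at6[simp]: "spencer \<omega> ({1,2},\<mu>,c) = \<omega> ({2},\<mu>+(0,1,0),c) - \<omega> ({1},\<mu>+(0,0,1),c)"
  apply (simp only: spencer_def prod.case filt_lt)
  apply (simp add: Int_insert_left insert_Diff_if unit_mi_def)
  done

lemma spencer_at7[simp]: "spencer \<omega> ({0,1,2},\<mu>,c) = \<omega> ({1,2},\<mu>+(1,0,0),c) - \<omega> ({0,2},\<mu>+(0,1,0),c) + \<omega> ({0,1},\<mu>+(0,0,1),c)"
  apply (simp only: spencer_def prod.case filt_lt)
  apply (simp add: Int_insert_left insert_Diff_if unit_mi_def)
  done

lemma neqI: "x \<in> A \<Longrightarrow> x \<notin> B \<Longrightarrow> A \<noteq> B" "x \<notin> A \<Longrightarrow> x \<in> B \<Longrightarrow> A \<noteq> B" by auto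

lemma sneq0[simp]: "{} \<noteq> ({0}::nat set)" by (rule neqI(2)[of "0"]) simp_all
lemma sneq1[simp]: "{} \<noteq> ({Suc 0}::nat set)" by (rule neqI(2)[of "Suc 0"]) simp_all
lemma sneq2[simp]: "{} \<noteq> ({2}::nat set)" by (rule neqI(2)[of "2"]) simp_all
lemma sneq3[simp]: "{} \<noteq> ({0,Suc 0}::nat set)" by (rule neqI(2)[of "0"]) simp_all
lemma sneq4[simp]: "{} \<noteq> ({0,2}::nat set)" by (rule neqI(2)[of "0"]) simp_all
lemma sneq5[simp]: "{} \<noteq> ({Suc 0,2}::nat set)" by (rule neqI(2)[of "Suc 0"]) simp_all
lemma sneq6[simp]: "{} \<noteq> ({0,Suc 0,2}::nat set)" by (rule neqI(2)[of "0"]) simp_all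
lemma sneq7[simp]: "{0} \<noteq> ({}::nat set)" by (rule neqI(1)[of "0"]) simp_all
lemma sneq8[simp]: "{0} \<noteq> ({Suc 0}::nat set)" by (rule neqI(1)[of "0"]) simp_all
lemma sneq9[simp]: "{0} \<noteq> ({2}::nat set)" by (rule neqI(1)[of "0"]) simp_all
lemma sneq10[simp]: "{0} \<noteq> ({0,Suc 0}::nat set)" by (rule neqI(2)[of "Suc 0"]) simp_all
lemma sneq11[simp]: "{0} \<noteq> ({0,2}::nat set)" by (rule neqI(2)[of "2"]) simp_all
lemma sneq12[simp]: "{0} \<noteq> ({Suc 0,2}::nat set)" by (rule neqI(1)[of "0"]) simp_all
lemma sneq13[simp]: "{0} \<noteq> ({0,Suc 0,2}::nat set)" by (rule neqI(2)[of "Suc 0"]) simp_all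
lemma sneq14[simp]: "{Suc 0} \<noteq> ({}::nat set)" by (rule neqI(1)[of "Suc 0"]) simp_all
lemma sneq15[simp]: "{Suc 0} \<noteq> ({0}::nat set)" by (rule neqI(1)[of "Suc 0"]) simp_all
lemma sneq16[simp]: "{Suc 0} \<noteq> ({2}::nat set)" by (rule neqI(1)[of "Suc 0"]) simp_all
lemma sneq17[simp]: "{Suc 0} \<noteq> ({0,Suc 0}::nat set)" by (rule neqI(2)[of "0"]) simp_all
lemma sneq18[simp]: "{Suc 0} \<noteq> ({0,2}::nat set)" by (rule neqI(1)[of "Suc 0"]) simp_all
lemma sneq19[simp]: "{Suc 0} \<noteq> ({Suc 0,2}::nat set)" by (rule neqI(2)[of "2"]) simp_all
lemma sneq20[simp]: "{Suc 0} \<noteq> ({0,Suc 0,2}::nat set)" by (rule neqI(2)[of "0"]) simp_all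
lemma sneq21[simp]: "{2} \<noteq> ({}::nat set)" by (rule neqI(1)[of "2"]) simp_all
lemma sneq22[simp]: "{2} \<noteq> ({0}::nat set)" by (rule neqI(1)[of "2"]) simp_all
lemma sneq23[simp]: "{2} \<noteq> ({Suc 0}::nat set)" by (rule neqI(1)[of "2"]) simp_all
lemma sneq24[simp]: "{2} \<noteq> ({0,Suc 0}::nat set)" by (rule neqI(1)[of "2"]) simp_all
lemma sneq25[simp]: "{2} \<noteq> ({0,2}::nat set)" by (rule neqI(2)[of "0"]) simp_all
lemma sneq26[simp]: "{2} \<noteq> ({Suc 0,2}::nat set)" by (rule neqI(2)[of "Suc 0"]) simp_all
lemma sneq27[simp]: "{2} \<noteq> ({0,Suc 0,2}::nat set)" by (rule neqI(2)[of "0"]) simp_all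
lemma sneq28[simp]: "{0,Suc 0} \<noteq> ({}::nat set)" by (rule neqI(1)[of "0"]) simp_all
lemma sneq29[simp]: "{0,Suc 0} \<noteq> ({0}::nat set)" by (rule neqI(1)[of "Suc 0"]) simp_all
lemma sneq30[simp]: "{0,Suc 0} \<noteq> ({Suc 0}::nat set)" by (rule neqI(1)[of "0"]) simp_all
lemma sneq31[simp]: "{0,Suc 0} \<noteq> ({2}::nat set)" by (rule neqI(1)[of "0"]) simp_all
lemma sneq32[simp]: "{0,Suc 0} \<noteq> ({0,2}::nat set)" by (rule neqI(1)[of "Suc 0"]) simp_all
lemma sneq33[simp]: "{0,Suc 0} \<noteq> ({Suc 0,2}::nat set)" by (rule neqI(1)[of "0"]) simp_all
lemma sneq34[simp]: "{0,Suc 0} \<noteq> ({0,Suc 0,2}::nat set)" by (rule neqI(2)[of "2"]) simp_all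
lemma sneq35[simp]: "{0,2} \<noteq> ({}::nat set)" by (rule neqI(1)[of "0"]) simp_all
lemma sneq36[simp]: "{0,2} \<noteq> ({0}::nat set)" by (rule neqI(1)[of "2"]) simp_all
lemma sneq37[simp]: "{0,2} \<noteq> ({Suc 0}::nat set)" by (rule neqI(1)[of "0"]) simp_all
lemma sneq38[simp]: "{0,2} \<noteq> ({2}::nat set)" by (rule neqI(1)[of "0"]) simp_all
lemma sneq39[simp]: "{0,2} \<noteq> ({0,Suc 0}::nat set)" by (rule neqI(1)[of "2"]) simp_all
lemma sneq40[simp]: "{0,2} \<noteq> ({Suc 0,2}::nat set)" by (rule neqI(1)[of "0"]) simp_all
lemma sneq41[simp]: "{0,2} \<noteq> ({0,Suc 0,2}::nat set)" by (rule neqI(2)[of "Suc 0"]) simp_all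
lemma sneq42[simp]: "{Suc 0,2} \<noteq> ({}::nat set)" by (rule neqI(1)[of "Suc 0"]) simp_all
lemma sneq43[simp]: "{Suc 0,2} \<noteq> ({0}::nat set)" by (rule neqI(1)[of "Suc 0"]) simp_all
lemma sneq44[simp]: "{Suc 0,2} \<noteq> ({Suc 0}::nat set)" by (rule neqI(1)[of "2"]) simp_all
lemma sneq45[simp]: "{Suc 0,2} \<noteq> ({2}::nat set)" by (rule neqI(1)[of "Suc 0"]) simp_all
lemma sneq46[simp]: "{Suc 0,2} \<noteq> ({0,Suc 0}::nat set)" by (rule neqI(1)[of "2"]) simp_all
lemma sneq47[simp]: "{Suc 0,2} \<noteq> ({0,2}::nat set)" by (rule neqI(1)[of "Suc 0"]) simp_all
lemma sneq48[simp]: "{Suc 0,2} \<noteq> ({0,Suc 0,2}::nat set)" by (rule neqI(2)[of "0"]) simp_all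
lemma sneq49[simp]: "{0,Suc 0,2} \<noteq> ({}::nat set)" by (rule neqI(1)[of "0"]) simp_all
lemma sneq50[simp]: "{0,Suc 0,2} \<noteq> ({0}::nat set)" by (rule neqI(1)[of "Suc 0"]) simp_all
lemma sneq51[simp]: "{0,Suc 0,2} \<noteq> ({Suc 0}::nat set)" by (rule neqI(1)[of "0"]) simp_all
lemma sneq52[simp]: "{0,Suc 0,2} \<noteq> ({2}::nat set)" by (rule neqI(1)[of "0"]) simp_all
lemma sneq53[simp]: "{0,Suc 0,2} \<noteq> ({0,Suc 0}::nat set)" by (rule neqI(1)[of "2"]) simp_all
lemma sneq54[simp]: "{0,Suc 0,2} \<noteq> ({0,2}::nat set)" by (rule neqI(1)[of "Suc 0"]) simp_all
lemma sneq55[simp]: "{0,Suc 0,2} \<noteq> ({Suc 0,2}::nat set)" by (rule neqI(1)[of "0"]) simp_all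

lemma spencer_atS0[simp]: "spencer \<omega> ({Suc 0},\<mu>,c) = \<omega> ({},\<mu>+(0,1,0),c)"
  using spencer_at2[of \<omega> \<mu> c] by simp

lemma spencer_atS1[simp]: "spencer \<omega> ({0,Suc 0},\<mu>,c) = \<omega> ({Suc 0},\<mu>+(1,0,0),c) - \<omega> ({0},\<mu>+(0,1,0),c)"
  using spencer_at4[of \<omega> \<mu> c] by simp

lemma spencer_atS2[simp]: "spencer \<omega> ({Suc 0,2},\<mu>,c) = \<omega> ({2},\<mu>+(0,1,0),c) - \<omega> ({Suc 0},\<mu>+(0,0,1),c)"
  using spencer_at6[of \<omega> \<mu> c] by simp

lemma spencer_atS3[simp]: "spencer \<omega> ({0,Suc 0,2},\<mu>,c) = \<omega> ({Suc 0,2},\<mu>+(1,0,0),c) - \<omega> ({0,2},\<mu>+(0,1,0),c) + \<omega> ({0,Suc 0},\<mu>+(0,0,1),c)"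
  using spencer_at7[of \<omega> \<mu> c] by simp

lemma spencer_out: "\<not> I \<subseteq> {0,1,2} \<Longrightarrow> spencer \<omega> (I,\<mu>,c) = 0"
  by (simp add: spencer_def)


lemma shiftj_app[simp]: "shiftj \<nu> v (\<mu>,c) = v (\<mu>+\<nu>,c)"
  by (simp add: shiftj_def)

lemma mk_app[simp]:
  "mk0 a (I,\<mu>,c) = (if I = {} then a (\<mu>,c) else 0)"
  "mk1 a0 a1 a2 (I,\<mu>,c) = (if I = {0} then a0 (\<mu>,c) else if I = {1} then a1 (\<mu>,c)
      else if I = {2} then a2 (\<mu>,c) else 0)"
  "mk2 a0 a1 a2 (I,\<mu>,c) = (if I = {0,1} then a0 (\<mu>,c) else if I = {0,2} then a1 (\<mu>,c)
      else if I = {1,2} then a2 (\<mu>,c) else 0)"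
  "mk3 a (I,\<mu>,c) = (if I = {0,1,2} then a (\<mu>,c) else 0)"
  by (simp_all add: mk0_def mk1_def mk2_def mk3_def)

lemma spencer_mk0: "spencer (mk0 a) = mk1 (s0 a) (s1 a) (s2 a)"
proof (rule ext, clarify)
  fix I \<mu> c
  show "spencer (mk0 a) (I,\<mu>,c) = mk1 (s0 a) (s1 a) (s2 a) (I,\<mu>,c)"
  proof (cases "I \<subseteq> {0,1,2}")
    case True
    then show ?thesis using subsets012[OF True] by (elim disjE) simp_all
  next
    case False
    then show ?thesis by (auto simp: spencer_out)
  qed
qed

lemma spencer_mk1: "spencer (mk1 a0 a1 a2) = mk2 (s0 a1 - s1 a0) (s0 a2 - s2 a0) (s1 a2 - s2 a1)"
proof (rule ext, clarify)
  fix I \<mu> c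
  show "spencer (mk1 a0 a1 a2) (I,\<mu>,c) = mk2 (s0 a1 - s1 a0) (s0 a2 - s2 a0) (s1 a2 - s2 a1) (I,\<mu>,c)"
  proof (cases "I \<subseteq> {0,1,2}")
    case True
    then show ?thesis using subsets012[OF True] by (elim disjE) simp_all
  next
    case False
    then show ?thesis by (auto simp: spencer_out)
  qed
qed

lemma spencer_mk2: "spencer (mk2 a0 a1 a2) = mk3 (s0 a2 - s1 a1 + s2 a0)"
proof (rule ext, clarify)
  fix I \<mu> c
  show "spencer (mk2 a0 a1 a2) (I,\<mu>,c) = mk3 (s0 a2 - s1 a1 + s2 a0) (I,\<mu>,c)"
  proof (cases "I \<subseteq> {0,1,2}")
    case True
    then show ?thesis using subsets012[OF True] by (elim disjE) simp_all
  next
    case False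
    then show ?thesis by (auto simp: spencer_out)
  qed
qed

lemma spencer_mk3: "spencer (mk3 a) = 0"
proof (rule ext, clarify)
  fix I \<mu> c
  show "spencer (mk3 a) (I,\<mu>,c) = 0 (I,\<mu>,c)"
  proof (cases "I \<subseteq> {0,1,2}")
    case True
    then show ?thesis using subsets012[OF True] by (elim disjE) simp_all
  next
    case False
    then show ?thesis by (auto simp: spencer_out)
  qed
qed


lemma card_subsets012:
  assumes "I \<subseteq> {0,1,2::nat}"
  shows "(card I = 0 \<longleftrightarrow> I = {})" "(card I = 1 \<longleftrightarrow> I = {0} \<or> I = {1} \<or> I = {2})"
    "(card I = 2 \<longleftrightarrow> I = {0,1} \<or> I = {0,2} \<or> I = {1,2})" "(card I = 3 \<longleftrightarrow> I = {0,1,2})"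
  using subsets012[OF assms] by (elim disjE; simp)+

lemma jet_eqI: "(\<And>\<mu> c. f (\<mu>,c) = g (\<mu>,c)) \<Longrightarrow> (f::jet) = g" by auto

lemma form_eqI: "(\<And>I \<mu> c. f (I,\<mu>,c) = g (I,\<mu>,c)) \<Longrightarrow> (f::form) = g" by auto

lemma Forms_zero: "\<omega> \<in> Forms j V \<Longrightarrow> \<not> (I \<subseteq> {0,1,2} \<and> card I = j) \<Longrightarrow> \<omega> (I,\<mu>,c) = 0"
  unfolding Forms_def by blast

lemma Forms_comp: "\<omega> \<in> Forms j V \<Longrightarrow> I \<subseteq> {0,1,2} \<Longrightarrow> card I = j \<Longrightarrow> comp \<omega> I \<in> V"
  unfolding Forms_def comp_def by blast

lemma Forms_intro: "(\<And>I. I \<subseteq> {0,1,2} \<Longrightarrow> card I = j \<Longrightarrow> comp \<omega> I \<in> V) \<Longrightarrow>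
   (\<And>I \<mu> c. \<not> (I \<subseteq> {0,1,2} \<and> card I = j) \<Longrightarrow> \<omega> (I,\<mu>,c) = 0) \<Longrightarrow> \<omega> \<in> Forms j V"
  unfolding Forms_def comp_def by auto

lemma comp_mk[simp]: "comp (mk0 a) {} = a" "comp (mk1 a0 a1 a2) {0} = a0" "comp (mk1 a0 a1 a2) {Suc 0} = a1"
  "comp (mk1 a0 a1 a2) {2} = a2" "comp (mk2 a0 a1 a2) {0,Suc 0} = a0" "comp (mk2 a0 a1 a2) {0,2} = a1"
  "comp (mk2 a0 a1 a2) {Suc 0,2} = a2" "comp (mk3 a) {0,Suc 0,2} = a"
  by (auto simp: comp_def)

lemma Forms0_iff: "\<omega> \<in> Forms 0 V \<longleftrightarrow> (\<exists>a. a \<in> V \<and> \<omega> = mk0 a)"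
proof
  assume h: "\<omega> \<in> Forms 0 V"
  have "comp \<omega> {} \<in> V" using h Forms_comp by force
  moreover have "\<omega> = mk0 (comp \<omega> {})"
  proof (rule form_eqI)
    fix I \<mu> c show "\<omega> (I,\<mu>,c) = mk0 (comp \<omega> {}) (I,\<mu>,c)"
    proof (cases "I \<subseteq> {0,1,2} \<and> card I = 0")
      case True then show ?thesis using card_subsets012 by (auto simp: comp_def)
    next
      case False
      then have "\<omega> (I,\<mu>,c) = 0" using h Forms_zero by blast
      moreover have "I \<noteq> {}" using False by auto
      ultimately show ?thesis by simp
    qed
  qed
  ultimately show "\<exists>a. a \<in> V \<and> \<omega> = mk0 a" by blast
next
  assume "\<exists>a. a \<in> V \<and> \<omega> = mk0 a"
  then obtain a where a: "a \<in> V" "\<omega> = mk0 a" by blast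
  show "\<omega> \<in> Forms 0 V"
  proof (rule Forms_intro)
    fix I :: "nat set"
    assume "I \<subseteq> {0,1,2}" "card I = 0"
    then have "I = {}" using card_subsets012 by auto
    then show "comp \<omega> I \<in> V" using a by simp
  next
    fix I :: "nat set" and \<mu> c
    assume "\<not> (I \<subseteq> {0,1,2::nat} \<and> card I = 0)"
    then have "I \<noteq> {}" by auto
    then show "\<omega> (I,\<mu>,c) = 0" using a by simp
  qed
qed

lemma Forms1_iff: "\<omega> \<in> Forms 1 V \<longleftrightarrow> (\<exists>a0 a1 a2. a0 \<in> V \<and> a1 \<in> V \<and> a2 \<in> V \<and> \<omega> = mk1 a0 a1 a2)"
proof
  assume h: "\<omega> \<in> Forms 1 V"
  have "comp \<omega> {0} \<in> V" "comp \<omega> {1} \<in> V" "comp \<omega> {2} \<in> V"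
    using h Forms_comp by force+
  moreover have "\<omega> = mk1 (comp \<omega> {0}) (comp \<omega> {1}) (comp \<omega> {2})"
  proof (rule form_eqI)
    fix I \<mu> c show "\<omega> (I,\<mu>,c) = mk1 (comp \<omega> {0}) (comp \<omega> {1}) (comp \<omega> {2}) (I,\<mu>,c)"
    proof (cases "I \<subseteq> {0,1,2} \<and> card I = 1")
      case True then show ?thesis using card_subsets012 by (auto simp: comp_def)
    next
      case False
      then have "\<omega> (I,\<mu>,c) = 0" using h Forms_zero by blast
      moreover have "I \<noteq> {0}" "I \<noteq> {1}" "I \<noteq> {2}" using False by auto
      ultimately show ?thesis by simp
    qed
  qed
  ultimately show "\<exists>a0 a1 a2. a0 \<in> V \<and> a1 \<in> V \<and> a2 \<in> V \<and> \<omega> = mk1 a0 a1 a2" by blast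
next
  assume "\<exists>a0 a1 a2. a0 \<in> V \<and> a1 \<in> V \<and> a2 \<in> V \<and> \<omega> = mk1 a0 a1 a2"
  then obtain a0 a1 a2 where a: "a0 \<in> V" "a1 \<in> V" "a2 \<in> V" "\<omega> = mk1 a0 a1 a2" by blast
  show "\<omega> \<in> Forms 1 V"
  proof (rule Forms_intro)
    fix I :: "nat set"
    assume "I \<subseteq> {0,1,2}" "card I = 1"
    then have "I = {0} \<or> I = {1} \<or> I = {2}" using card_subsets012 by auto
    then show "comp \<omega> I \<in> V" using a by (elim disjE) simp_all
  next
    fix I :: "nat set" and \<mu> c
    assume "\<not> (I \<subseteq> {0,1,2::nat} \<and> card I = 1)"
    then have "I \<noteq> {0}" "I \<noteq> {1}" "I \<noteq> {2}" by auto
    then show "\<omega> (I,\<mu>,c) = 0" using a by simp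
  qed
qed

lemma Forms2_iff: "\<omega> \<in> Forms 2 V \<longleftrightarrow> (\<exists>a0 a1 a2. a0 \<in> V \<and> a1 \<in> V \<and> a2 \<in> V \<and> \<omega> = mk2 a0 a1 a2)"
proof
  assume h: "\<omega> \<in> Forms 2 V"
  have "comp \<omega> {0,1} \<in> V" "comp \<omega> {0,2} \<in> V" "comp \<omega> {1,2} \<in> V"
    using h Forms_comp by force+
  moreover have "\<omega> = mk2 (comp \<omega> {0,1}) (comp \<omega> {0,2}) (comp \<omega> {1,2})"
  proof (rule form_eqI)
    fix I \<mu> c show "\<omega> (I,\<mu>,c) = mk2 (comp \<omega> {0,1}) (comp \<omega> {0,2}) (comp \<omega> {1,2}) (I,\<mu>,c)"
    proof (cases "I \<subseteq> {0,1,2} \<and> card I = 2")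
      case True then show ?thesis using card_subsets012 by (auto simp: comp_def)
    next
      case False
      then have "\<omega> (I,\<mu>,c) = 0" using h Forms_zero by blast
      moreover have "I \<noteq> {0,1}" "I \<noteq> {0,2}" "I \<noteq> {1,2}" using False by auto
      ultimately show ?thesis by simp
    qed
  qed
  ultimately show "\<exists>a0 a1 a2. a0 \<in> V \<and> a1 \<in> V \<and> a2 \<in> V \<and> \<omega> = mk2 a0 a1 a2" by blast
next
  assume "\<exists>a0 a1 a2. a0 \<in> V \<and> a1 \<in> V \<and> a2 \<in> V \<and> \<omega> = mk2 a0 a1 a2"
  then obtain a0 a1 a2 where a: "a0 \<in> V" "a1 \<in> V" "a2 \<in> V" "\<omega> = mk2 a0 a1 a2" by blast
  show "\<omega> \<in> Forms 2 V"
  proof (rule Forms_intro)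
    fix I :: "nat set"
    assume "I \<subseteq> {0,1,2}" "card I = 2"
    then have "I = {0,1} \<or> I = {0,2} \<or> I = {1,2}" using card_subsets012 by auto
    then show "comp \<omega> I \<in> V" using a by (elim disjE) simp_all
  next
    fix I :: "nat set" and \<mu> c
    assume "\<not> (I \<subseteq> {0,1,2::nat} \<and> card I = 2)"
    then have "I \<noteq> {0,1}" "I \<noteq> {0,2}" "I \<noteq> {1,2}" by auto
    then show "\<omega> (I,\<mu>,c) = 0" using a by simp
  qed
qed

lemma Forms3_iff: "\<omega> \<in> Forms 3 V \<longleftrightarrow> (\<exists>a. a \<in> V \<and> \<omega> = mk3 a)"
proof
  assume h: "\<omega> \<in> Forms 3 V"
  have "comp \<omega> {0,1,2} \<in> V" using h Forms_comp by force
  moreover have "\<omega> = mk3 (comp \<omega> {0,1,2})"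
  proof (rule form_eqI)
    fix I \<mu> c show "\<omega> (I,\<mu>,c) = mk3 (comp \<omega> {0,1,2}) (I,\<mu>,c)"
    proof (cases "I \<subseteq> {0,1,2} \<and> card I = 3")
      case True then show ?thesis using card_subsets012 by (auto simp: comp_def)
    next
      case False
      then have "\<omega> (I,\<mu>,c) = 0" using h Forms_zero by blast
      moreover have "I \<noteq> {0,1,2}" using False by auto
      ultimately show ?thesis by simp
    qed
  qed
  ultimately show "\<exists>a. a \<in> V \<and> \<omega> = mk3 a" by blast
next
  assume "\<exists>a. a \<in> V \<and> \<omega> = mk3 a"
  then obtain a where a: "a \<in> V" "\<omega> = mk3 a" by blast
  show "\<omega> \<in> Forms 3 V"
  proof (rule Forms_intro)
    fix I :: "nat set"
    assume "I \<subseteq> {0,1,2}" "card I = 3"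
    then have "I = {0,1,2}" using card_subsets012 by auto
    then show "comp \<omega> I \<in> V" using a by simp
  next
    fix I :: "nat set" and \<mu> c
    assume "\<not> (I \<subseteq> {0,1,2::nat} \<and> card I = 3)"
    then have "I \<noteq> {0,1,2}" by auto
    then show "\<omega> (I,\<mu>,c) = 0" using a by simp
  qed
qed




lemma two_Suc[simp]: "Suc (Suc 0) = 2" by simp

lemma mdeg_plus[simp]: "mdeg (\<mu> + \<nu>) = mdeg \<mu> + mdeg \<nu>"
  by (cases \<mu>; cases \<nu>) simp

lemma lookup_dop: "Poly_Mapping.lookup (dop \<mu>) \<alpha> = (if \<alpha> = \<mu> then 1 else 0)"
  by (simp add: dop_def lookup_single)

lemma keys_dop[simp]: "Poly_Mapping.keys (dop \<mu>) = {\<mu>}"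
  by (simp add: dop_def)

lemma keys_opQ: "Poly_Mapping.keys opQ = {(0,1,1),(2,0,0)}"
  by (auto simp: opQ_def in_keys_iff lookup_minus lookup_dop split: if_splits)

lemma lookup_opQ: "Poly_Mapping.lookup opQ \<alpha> = (if \<alpha> = (0,1,1) then 1 else if \<alpha> = (2,0,0) then -1 else 0)"
  by (auto simp: opQ_def lookup_minus lookup_dop)

definition ph :: "jet \<Rightarrow> mi \<Rightarrow> nat \<Rightarrow> real" where
  "ph v \<nu> \<tau> = (if \<tau> = 0 then v ((0,2,0)+\<nu>,0) else if \<tau> = 1 then v ((0,1,1)+\<nu>,0) - v ((2,0,0)+\<nu>,0)
     else if \<tau> = 2 then v ((0,0,2)+\<nu>,0) else 0)"

lemma opapp_Phi: "opapp [[opP],[opQ],[opR]] v (\<nu>,\<tau>) = ph v \<nu> \<tau>"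
proof -
  have "\<tau> = 0 \<or> \<tau> = 1 \<or> \<tau> = 2 \<or> \<tau> \<ge> 3" by arith
  then show ?thesis
    by (elim disjE) (simp_all add: opapp_def ph_def opP_def opR_def keys_opQ lookup_opQ lookup_dop)
qed


definition eqs :: "jet \<Rightarrow> mi \<Rightarrow> bool" where
  "eqs v \<nu> \<longleftrightarrow> v ((0,2,0)+\<nu>,0) = 0 \<and> v ((0,1,1)+\<nu>,0) = v ((2,0,0)+\<nu>,0) \<and> v ((0,0,2)+\<nu>,0) = 0"

lemma Ssp_zero: "v \<in> Ssp m k \<Longrightarrow> \<not> (mdeg \<mu> = k \<and> c < m) \<Longrightarrow> v (\<mu>,c) = 0"
  unfolding Ssp_def by blast

lemma Ssp_Jsp: "v \<in> Ssp m k \<Longrightarrow> v \<in> Jsp m k"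
  unfolding Ssp_def Jsp_def by auto

lemma ph_eqs: "(\<forall>\<tau><3. ph v \<nu> \<tau> = 0) \<longleftrightarrow> eqs v \<nu>"
proof
  assume "\<forall>\<tau><3. ph v \<nu> \<tau> = 0"
  then have "ph v \<nu> 0 = 0" "ph v \<nu> 1 = 0" "ph v \<nu> 2 = 0" by auto
  then show "eqs v \<nu>" by (simp add: ph_def eqs_def)
next
  assume "eqs v \<nu>"
  then show "\<forall>\<tau><3. ph v \<nu> \<tau> = 0" by (auto simp: ph_def eqs_def)
qed

lemma symb_Phi: "symb [[opP],[opQ],[opR]] 1 2 r = {v \<in> Ssp 1 (2+r). \<forall>\<nu>. mdeg \<nu> = r \<longrightarrow> eqs v \<nu>}"
proof (intro set_eqI iffI)
  fix v assume h: "v \<in> symb [[opP],[opQ],[opR]] 1 2 r"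
  then have v1: "v \<in> Ssp 1 (2+r)" unfolding symb_def by auto
  from h have hh: "\<forall>\<nu> \<tau>. mdeg \<nu> \<le> r \<and> \<tau> < length [[opP],[opQ],[opR]] \<longrightarrow> opapp [[opP],[opQ],[opR]] v (\<nu>,\<tau>) = 0"
    unfolding symb_def Rsys_def by blast
  have v: "v \<in> Ssp 1 (2+r)" "\<forall>\<nu> \<tau>. mdeg \<nu> \<le> r \<and> \<tau> < 3 \<longrightarrow> ph v \<nu> \<tau> = 0"
    using v1 apply simp
    using hh by (simp add: opapp_Phi)
  have "eqs v \<nu>" if "mdeg \<nu> = r" for \<nu>
  proof -
    have "\<forall>\<tau><3. ph v \<nu> \<tau> = 0" using v(2) that by blast
    then show ?thesis using ph_eqs by blast
  qed
  then show "v \<in> {v \<in> Ssp 1 (2+r). \<forall>\<nu>. mdeg \<nu> = r \<longrightarrow> eqs v \<nu>}"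
    using v(1) by auto
next
  fix v assume "v \<in> {v \<in> Ssp 1 (2+r). \<forall>\<nu>. mdeg \<nu> = r \<longrightarrow> eqs v \<nu>}"
  then have v: "v \<in> Ssp 1 (2+r)" "\<And>\<nu>. mdeg \<nu> = r \<Longrightarrow> eqs v \<nu>" by auto
  have "ph v \<nu> \<tau> = 0" if "mdeg \<nu> \<le> r" "\<tau> < 3" for \<nu> \<tau>
  proof (cases "mdeg \<nu> = r")
    case True then show ?thesis using v(2) ph_eqs that by blast
  next
    case False
    then have "mdeg \<nu> < r" using that by simp
    then show ?thesis using Ssp_zero[OF v(1)] by (simp add: ph_def)
  qed
  then show "v \<in> symb [[opP],[opQ],[opR]] 1 2 r"
    unfolding symb_def Rsys_def using v(1) Ssp_Jsp by (auto simp: opapp_Phi)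
qed

lemma nat_le4: "(a::nat) \<le> 4 \<Longrightarrow> a = 0 \<or> a = 1 \<or> a = 2 \<or> a = 3 \<or> a = 4" by arith

lemma mdeg4: "mdeg \<mu> = 4 \<Longrightarrow> \<mu> \<in> {(0,0,4),(0,1,3),(0,2,2),(0,3,1),(0,4,0),(1,0,3),(1,1,2),(1,2,1),(1,3,0),(2,0,2),(2,1,1),(2,2,0),(3,0,1),(3,1,0),(4,0,0)}"
proof -
  assume h: "mdeg \<mu> = 4"
  obtain a b c where m: "\<mu> = (a,b,c)" by (cases \<mu>)
  with h have "a + b + c = 4" by simp
  moreover from this have "a \<le> 4" "b \<le> 4" by arith+
  ultimately show ?thesis using m nat_le4[OF \<open>a \<le> 4\<close>] nat_le4[OF \<open>b \<le> 4\<close>] by (elim disjE) simp_all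
qed

lemma mdeg3: "mdeg \<mu> = 3 \<Longrightarrow> \<mu> \<in> {(0,0,3),(0,1,2),(0,2,1),(0,3,0),(1,0,2),(1,1,1),(1,2,0),(2,0,1),(2,1,0),(3,0,0)}"
proof -
  assume h: "mdeg \<mu> = 3"
  obtain a b c where m: "\<mu> = (a,b,c)" by (cases \<mu>)
  with h have "a + b + c = 3" by simp
  moreover from this have "a \<le> 4" "b \<le> 4" by arith+
  ultimately show ?thesis using m nat_le4[OF \<open>a \<le> 4\<close>] nat_le4[OF \<open>b \<le> 4\<close>] by (elim disjE) simp_all
qed

lemma mdeg2: "mdeg \<mu> = 2 \<Longrightarrow> \<mu> \<in> {(0,0,2),(0,1,1),(0,2,0),(1,0,1),(1,1,0),(2,0,0)}"
proof -
  assume h: "mdeg \<mu> = 2"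
  obtain a b c where m: "\<mu> = (a,b,c)" by (cases \<mu>)
  with h have "a + b + c = 2" by simp
  moreover from this have "a \<le> 4" "b \<le> 4" by arith+
  ultimately show ?thesis using m nat_le4[OF \<open>a \<le> 4\<close>] nat_le4[OF \<open>b \<le> 4\<close>] by (elim disjE) simp_all
qed

lemma mdeg1: "mdeg \<mu> = 1 \<Longrightarrow> \<mu> \<in> {(1,0,0),(0,1,0),(0,0,1)}"
proof -
  assume h: "mdeg \<mu> = 1"
  obtain a b c where m: "\<mu> = (a,b,c)" by (cases \<mu>)
  with h have "a + b + c = 1" by simp
  moreover from this have "a \<le> 4" "b \<le> 4" by arith+
  ultimately show ?thesis using m nat_le4[OF \<open>a \<le> 4\<close>] nat_le4[OF \<open>b \<le> 4\<close>] by (elim disjE) simp_all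
qed

lemma G4: assumes w: "w \<in> Ssp 1 4" and e: "\<And>\<nu>. mdeg \<nu> = 2 \<Longrightarrow> eqs w \<nu>"
  shows "w = 0"
proof -
  have "eqs w (0,0,2)" "eqs w (0,1,1)" "eqs w (0,2,0)" "eqs w (1,0,1)" "eqs w (1,1,0)" "eqs w (2,0,0)" by (rule e; simp)+
  then have z: "w ((0,0,4),0) = 0" "w ((0,1,3),0) = 0" "w ((0,2,2),0) = 0" "w ((0,3,1),0) = 0" "w ((0,4,0),0) = 0" "w ((1,0,3),0) = 0" "w ((1,1,2),0) = 0" "w ((1,2,1),0) = 0" "w ((1,3,0),0) = 0" "w ((2,0,2),0) = 0" "w ((2,1,1),0) = 0" "w ((2,2,0),0) = 0" "w ((3,0,1),0) = 0" "w ((3,1,0),0) = 0" "w ((4,0,0),0) = 0"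
    by (simp_all add: eqs_def)
  show ?thesis
  proof (rule jet_eqI)
    fix \<mu> c
    show "w (\<mu>,c) = 0 (\<mu>,c)"
    proof (cases "mdeg \<mu> = 4 \<and> c < 1")
      case True
      then have "c = 0" by simp
      with mdeg4[of \<mu>] True z show ?thesis by auto
    next
      case False then show ?thesis using Ssp_zero[OF w] by simp
    qed
  qed
qed




lemma decomp_mi: "mdeg \<nu> = a + b \<Longrightarrow> \<exists>\<nu>1 \<nu>2. \<nu> = \<nu>1 + \<nu>2 \<and> mdeg \<nu>1 = a \<and> mdeg \<nu>2 = b"
proof -
  assume h: "mdeg \<nu> = a + b"
  obtain x y z where n: "\<nu> = (x,y,z)" by (cases \<nu>)
  define x1 where "x1 = min x a"
  define y1 where "y1 = min y (a - x1)"
  define z1 where "z1 = a - x1 - y1"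
  have "x + y + z = a + b" using h n by simp
  then have le: "x1 \<le> x" "y1 \<le> y" "z1 \<le> z" "x1 + y1 + z1 = a"
    unfolding x1_def y1_def z1_def by (auto simp: min_def)
  show ?thesis
  proof (intro exI conjI)
    show "\<nu> = (x1,y1,z1) + (x-x1,y-y1,z-z1)" using n le by simp
    show "mdeg (x1,y1,z1) = a" using le by simp
    show "mdeg (x-x1,y-y1,z-z1) = b" using le \<open>x + y + z = a + b\<close> by simp
  qed
qed

lemma SspI: "(\<And>\<mu> c. \<not> (mdeg \<mu> = k \<and> c < m) \<Longrightarrow> v (\<mu>,c) = 0) \<Longrightarrow> v \<in> Ssp m k"
  unfolding Ssp_def by blast

lemma shift_Ssp: assumes "v \<in> Ssp m (n + d)" "mdeg \<nu> = d" shows "shiftj \<nu> v \<in> Ssp m n"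
proof (rule SspI)
  fix \<mu> c assume "\<not> (mdeg \<mu> = n \<and> c < m)"
  then have "\<not> (mdeg (\<mu> + \<nu>) = n + d \<and> c < m)" using assms(2) by simp
  then show "shiftj \<nu> v (\<mu>,c) = 0" using Ssp_zero[OF assms(1)] by simp
qed

lemma eqs_shift: "eqs (shiftj \<nu> v) \<nu>' \<longleftrightarrow> eqs v (\<nu>' + \<nu>)"
  by (simp add: eqs_def add.assoc)

definition gS :: "nat \<Rightarrow> jet set" where
  "gS k = {v \<in> Ssp 1 (2+k). \<forall>\<nu>. mdeg \<nu> = k \<longrightarrow> eqs v \<nu>}"

lemma symb_gS: "symb [[opP],[opQ],[opR]] 1 2 k = gS k"
  unfolding symb_Phi gS_def by (rule refl)

lemma prol_gS: assumes "q = 2 + k" shows "prol 1 q (gS k) r = gS (k + r)"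
proof (intro set_eqI iffI)
  fix v assume "v \<in> prol 1 q (gS k) r"
  then have v: "v \<in> Ssp 1 (2 + k + r)" "\<And>\<nu>. mdeg \<nu> = r \<Longrightarrow> shiftj \<nu> v \<in> gS k"
    unfolding prol_def using assms by auto
  have "eqs v \<nu>'" if md: "mdeg \<nu>' = k + r" for \<nu>'
  proof -
    obtain \<nu>1 \<nu>2 where d: "\<nu>' = \<nu>1 + \<nu>2" "mdeg \<nu>1 = k" "mdeg \<nu>2 = r"
      using decomp_mi[OF md] by blast
    then have "eqs (shiftj \<nu>2 v) \<nu>1" using v(2)[OF d(3)] unfolding gS_def by blast
    then show ?thesis using d(1) eqs_shift by simp
  qed
  then show "v \<in> gS (k + r)" using v(1) unfolding gS_def by (simp add: add.assoc)
next
  fix v assume "v \<in> gS (k + r)"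
  then have v: "v \<in> Ssp 1 (2 + k + r)" "\<And>\<nu>. mdeg \<nu> = k + r \<Longrightarrow> eqs v \<nu>"
    unfolding gS_def by (auto simp: add.assoc)
  have "shiftj \<nu> v \<in> gS k" if "mdeg \<nu> = r" for \<nu>
    unfolding gS_def using shift_Ssp[OF v(1) that] v(2) that by (auto simp: eqs_shift)
  then show "v \<in> prol 1 q (gS k) r" unfolding prol_def using v(1) assms by auto
qed

lemma gS_zero: assumes "k \<ge> 2" shows "gS k = {0}"
proof (intro set_eqI iffI)
  fix v assume "v \<in> gS k"
  then have v: "v \<in> Ssp 1 (2 + k)" "\<And>\<nu>. mdeg \<nu> = k \<Longrightarrow> eqs v \<nu>"
    unfolding gS_def by auto
  have "v (\<mu>,c) = 0" for \<mu> c
  proof (cases "mdeg \<mu> = 2 + k \<and> c < 1")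
    case True
    then have "mdeg \<mu> = 4 + (k - 2)" using assms by simp
    then obtain \<rho> \<nu>0 where d: "\<mu> = \<rho> + \<nu>0" "mdeg \<rho> = 4" "mdeg \<nu>0 = k - 2"
      using decomp_mi by blast
    have "shiftj \<nu>0 v \<in> Ssp 1 4" using shift_Ssp[of v 1 4 "k-2" \<nu>0] v(1) d(3) assms by simp
    moreover have "eqs (shiftj \<nu>0 v) \<nu>" if "mdeg \<nu> = 2" for \<nu>
      using v(2)[of "\<nu> + \<nu>0"] that d(3) assms by (simp add: eqs_shift)
    ultimately have "shiftj \<nu>0 v = 0" using G4 by blast
    then have "shiftj \<nu>0 v (\<rho>,c) = 0" by simp
    then show ?thesis using d(1) by simp
  next
    case False then show ?thesis using Ssp_zero[OF v(1)] by simp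
  qed
  then show "v \<in> {0}" by auto
next
  fix v :: jet assume "v \<in> {0}"
  then show "v \<in> gS k" unfolding gS_def Ssp_def eqs_def by auto
qed




lemma vs_fun: "vector_space (\<lambda>(c::real) (f::'a \<Rightarrow> real) x. c * f x)"
  by (unfold_locales) (auto simp: fun_eq_iff algebra_simps)

lemma fdim3:
  fixes ba bb bc :: "'a \<Rightarrow> real" and V :: "('a \<Rightarrow> real) set"
  assumes V: "ba \<in> V" "bb \<in> V" "bc \<in> V" "\<And>v. v \<in> V \<Longrightarrow> \<exists>k1 k2 k3. v = (\<lambda>x. k1 * ba x + k2 * bb x + k3 * bc x)"
    and p: "ba pa = 1" "bb pa = 0" "bc pa = 0" "ba pb = 0" "bb pb = 1" "bc pb = 0"
      "ba pc = 0" "bb pc = 0" "bc pc = 1"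
  shows "fdim V = 3"
proof -
  interpret v: vector_space "\<lambda>(c::real) (f::'a \<Rightarrow> real) x. c * f x" by (rule vs_fun)
  have d: "ba \<noteq> bb" "ba \<noteq> bc" "bb \<noteq> bc" using p by auto
  have "v.dim V = 3"
  proof (rule v.dim_unique[of "{ba,bb,bc}"])
    show "{ba,bb,bc} \<subseteq> V" using V by auto
    show "V \<subseteq> v.span {ba,bb,bc}"
    proof
      fix w assume "w \<in> V"
      then obtain k1 k2 k3 where w: "w = (\<lambda>x. k1 * ba x + k2 * bb x + k3 * bc x)" using V(4) by blast
      have "(\<lambda>x. k1 * ba x) + ((\<lambda>x. k2 * bb x) + (\<lambda>x. k3 * bc x)) \<in> v.span {ba,bb,bc}"
        by (intro v.span_add v.span_scale v.span_base; simp)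
      moreover have "(\<lambda>x. k1 * ba x) + ((\<lambda>x. k2 * bb x) + (\<lambda>x. k3 * bc x)) = w"
        using w by (simp add: fun_eq_iff)
      ultimately show "w \<in> v.span {ba,bb,bc}" by simp
    qed
    show "v.independent {ba,bb,bc}"
    proof (rule v.independent_if_scalars_zero)
      show "finite {ba,bb,bc}" by simp
      fix c w assume h: "(\<Sum>w\<in>{ba,bb,bc}. (\<lambda>x. c w * w x)) = 0"
        and w: "w \<in> {ba,bb,bc}"
      have e: "(\<Sum>w\<in>{ba,bb,bc}. (\<lambda>x. c w * w x)) = (\<lambda>x. c ba * ba x + c bb * bb x + c bc * bc x)"
        using d by (simp add: fun_eq_iff)
      have "c ba * ba x + c bb * bb x + c bc * bc x = 0" for x
        using h unfolding e by (metis zero_fun_apply)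
      from this[of pa] this[of pb] this[of pc] have "c ba = 0" "c bb = 0" "c bc = 0" using p by simp_all
      then show "c w = 0" using w by auto
    qed
    show "card {ba,bb,bc} = 3" using d by simp
  qed
  then show ?thesis unfolding fdim_def .
qed

lemma fdim1:
  fixes ba :: "'a \<Rightarrow> real" and V :: "('a \<Rightarrow> real) set"
  assumes V: "ba \<in> V" "\<And>v. v \<in> V \<Longrightarrow> \<exists>k1. v = (\<lambda>x. k1 * ba x)"
    and p: "ba pa = 1"
  shows "fdim V = 1"
proof -
  interpret v: vector_space "\<lambda>(c::real) (f::'a \<Rightarrow> real) x. c * f x" by (rule vs_fun)
  have "v.dim V = 1"
  proof (rule v.dim_unique[of "{ba}"])
    show "{ba} \<subseteq> V" using V by auto
    show "V \<subseteq> v.span {ba}"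
    proof
      fix w assume "w \<in> V"
      then obtain k1 where w: "w = (\<lambda>x. k1 * ba x)" using V(2) by blast
      have "(\<lambda>x. k1 * ba x) \<in> v.span {ba}"
        by (intro v.span_scale v.span_base; simp)
      then show "w \<in> v.span {ba}" using w by simp
    qed
    have "ba \<noteq> 0" using p by (metis zero_fun_apply zero_neq_one)
    then show "v.independent {ba}" by simp
    show "card {ba} = 1" by simp
  qed
  then show ?thesis unfolding fdim_def .
qed




definition ind :: "mi set \<Rightarrow> jet" where
  "ind S = (\<lambda>(\<mu>,c). if c = 0 \<and> \<mu> \<in> S then 1 else 0)"

lemma ind_app[simp]: "ind S (\<mu>,c) = (if c = 0 \<and> \<mu> \<in> S then 1 else 0)"
  by (simp add: ind_def)

abbreviation "e3 \<equiv> ind {(3,0,0),(1,1,1)}"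
abbreviation "f1 \<equiv> ind {(2,0,0),(0,1,1)}"
abbreviation "f2 \<equiv> ind {(1,1,0)}"
abbreviation "f3 \<equiv> ind {(1,0,1)}"

lemma gS1_char: "v \<in> gS 1 \<longleftrightarrow> (\<exists>k. v = (\<lambda>x. k * e3 x))"
proof
  assume "v \<in> gS 1"
  then have v: "v \<in> Ssp 1 3" "\<And>\<nu>. mdeg \<nu> = 1 \<Longrightarrow> eqs v \<nu>" unfolding gS_def by auto
  have "eqs v (1,0,0)" "eqs v (0,1,0)" "eqs v (0,0,1)" by (rule v(2); simp)+
  then have z: "v ((1,2,0),0) = 0" "v ((1,0,2),0) = 0" "v ((0,3,0),0) = 0" "v ((0,1,2),0) = 0"
    "v ((0,2,1),0) = 0" "v ((0,0,3),0) = 0" "v ((2,1,0),0) = 0" "v ((2,0,1),0) = 0"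
    "v ((1,1,1),0) = v ((3,0,0),0)"
    by (simp_all add: eqs_def)
  have "v = (\<lambda>x. v ((3,0,0),0) * e3 x)"
  proof (rule jet_eqI)
    fix \<mu> c
    show "v (\<mu>,c) = v ((3,0,0),0) * e3 (\<mu>,c)"
    proof (cases "mdeg \<mu> = 3 \<and> c < 1")
      case True
      then have "c = 0" by simp
      with mdeg3[of \<mu>] True z show ?thesis by auto
    next
      case False then show ?thesis using Ssp_zero[OF v(1)] by auto
    qed
  qed
  then show "\<exists>k. v = (\<lambda>x. k * e3 x)" by blast
next
  assume "\<exists>k. v = (\<lambda>x. k * e3 x)"
  then obtain k where k: "v = (\<lambda>x. k * e3 x)" by blast
  have "v \<in> Ssp 1 3" by (rule SspI) (auto simp: k)
  moreover have "eqs v \<nu>" if "mdeg \<nu> = 1" for \<nu>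
    using mdeg1[OF that] by (auto simp: k eqs_def)
  ultimately show "v \<in> gS 1" unfolding gS_def by auto
qed

lemma gS0_char: "v \<in> gS 0 \<longleftrightarrow> (\<exists>a b c. v = (\<lambda>x. a * f1 x + b * f2 x + c * f3 x))"
proof
  assume "v \<in> gS 0"
  then have v: "v \<in> Ssp 1 2" "\<And>\<nu>. mdeg \<nu> = 0 \<Longrightarrow> eqs v \<nu>" unfolding gS_def by auto
  have "eqs v (0,0,0)" by (rule v(2); simp)
  then have z: "v ((0,2,0),0) = 0" "v ((0,0,2),0) = 0" "v ((0,1,1),0) = v ((2,0,0),0)"
    by (simp_all add: eqs_def)
  have "v = (\<lambda>x. v ((2,0,0),0) * f1 x + v ((1,1,0),0) * f2 x + v ((1,0,1),0) * f3 x)"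
  proof (rule jet_eqI)
    fix \<mu> c
    show "v (\<mu>,c) = v ((2,0,0),0) * f1 (\<mu>,c) + v ((1,1,0),0) * f2 (\<mu>,c) + v ((1,0,1),0) * f3 (\<mu>,c)"
    proof (cases "mdeg \<mu> = 2 \<and> c < 1")
      case True
      then have "c = 0" by simp
      with mdeg2[of \<mu>] True z show ?thesis by auto
    next
      case False then show ?thesis using Ssp_zero[OF v(1)] by auto
    qed
  qed
  then show "\<exists>a b c. v = (\<lambda>x. a * f1 x + b * f2 x + c * f3 x)" by blast
next
  assume "\<exists>a b c. v = (\<lambda>x. a * f1 x + b * f2 x + c * f3 x)"
  then obtain a b c where k: "v = (\<lambda>x. a * f1 x + b * f2 x + c * f3 x)" by blast
  have "v \<in> Ssp 1 2" by (rule SspI) (auto simp: k)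
  moreover have "eqs v \<nu>" if "mdeg \<nu> = 0" for \<nu>
  proof -
    have "\<nu> = (0,0,0)" using that by (cases \<nu>) simp
    then show ?thesis by (simp add: k eqs_def)
  qed
  ultimately show "v \<in> gS 0" unfolding gS_def by auto
qed

lemma sp_e3: "s0 (\<lambda>x. k2 * e3 x) - s1 (\<lambda>x. k1 * e3 x) + s2 (\<lambda>x. k0 * e3 x)
   = (\<lambda>x. k2 * f1 x + k0 * f2 x + (- k1) * f3 x)"
proof (rule jet_eqI)
  fix \<mu> :: mi and c :: nat
  obtain a b d where "\<mu> = (a,b,d)" by (cases \<mu>)
  then show "(s0 (\<lambda>x. k2 * e3 x) - s1 (\<lambda>x. k1 * e3 x) + s2 (\<lambda>x. k0 * e3 x)) (\<mu>,c)
     = k2 * f1 (\<mu>,c) + k0 * f2 (\<mu>,c) + (- k1) * f3 (\<mu>,c)"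
    by auto
qed


lemma F2g1: "\<omega> \<in> Forms 2 (gS 1) \<longleftrightarrow> (\<exists>k0 k1 k2. \<omega> = mk2 (\<lambda>x. k0 * e3 x) (\<lambda>x. k1 * e3 x) (\<lambda>x. k2 * e3 x))"
  unfolding Forms2_iff gS1_char by blast

lemma F3g0: "\<omega> \<in> Forms 3 (gS 0) \<longleftrightarrow> (\<exists>a b c. \<omega> = mk3 (\<lambda>x. a * f1 x + b * f2 x + c * f3 x))"
  unfolding Forms3_iff gS0_char by blast

lemma sp_F2g1: "spencer (mk2 (\<lambda>x. k0 * e3 x) (\<lambda>x. k1 * e3 x) (\<lambda>x. k2 * e3 x))
   = mk3 (\<lambda>x. k2 * f1 x + k0 * f2 x + (- k1) * f3 x)"
  by (simp only: spencer_mk2 sp_e3)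

lemma mk3_inj: "mk3 a = mk3 b \<Longrightarrow> a = b"
  by (metis comp_mk(8))

lemma bij_g: "bij_betw spencer (Forms 2 (gS 1)) (Forms 3 (gS 0))"
  unfolding bij_betw_def
proof
  show "inj_on spencer (Forms 2 (gS 1))"
  proof (rule inj_onI)
    fix x y assume "x \<in> Forms 2 (gS 1)" "y \<in> Forms 2 (gS 1)" and e: "spencer x = spencer y"
    then obtain k0 k1 k2 l0 l1 l2 where
      x: "x = mk2 (\<lambda>x. k0 * e3 x) (\<lambda>x. k1 * e3 x) (\<lambda>x. k2 * e3 x)" and
      y: "y = mk2 (\<lambda>x. l0 * e3 x) (\<lambda>x. l1 * e3 x) (\<lambda>x. l2 * e3 x)"
      unfolding F2g1 by blast
    from e have "(\<lambda>x. k2 * f1 x + k0 * f2 x + (- k1) * f3 x) = (\<lambda>x. l2 * f1 x + l0 * f2 x + (- l1) * f3 x)"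
      unfolding x y sp_F2g1 by (rule mk3_inj)
    from fun_cong[OF this, of "((2,0,0),0)"] fun_cong[OF this, of "((1,1,0),0)"] fun_cong[OF this, of "((1,0,1),0)"]
    have "k2 = l2" "k0 = l0" "k1 = l1" by simp_all
    then show "x = y" using x y by simp
  qed
  show "spencer ` Forms 2 (gS 1) = Forms 3 (gS 0)"
  proof (intro set_eqI iffI)
    fix z assume "z \<in> spencer ` Forms 2 (gS 1)"
    then obtain y where "y \<in> Forms 2 (gS 1)" "z = spencer y" by blast
    then obtain k0 k1 k2 where "z = spencer (mk2 (\<lambda>x. k0 * e3 x) (\<lambda>x. k1 * e3 x) (\<lambda>x. k2 * e3 x))"
      unfolding F2g1 by blast
    then show "z \<in> Forms 3 (gS 0)" unfolding F3g0 sp_F2g1 by blast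
  next
    fix z assume "z \<in> Forms 3 (gS 0)"
    then obtain a b c where z: "z = mk3 (\<lambda>x. a * f1 x + b * f2 x + c * f3 x)" unfolding F3g0 by blast
    have "z = spencer (mk2 (\<lambda>x. b * e3 x) (\<lambda>x. (- c) * e3 x) (\<lambda>x. a * e3 x))"
      unfolding z sp_F2g1 by simp
    moreover have "mk2 (\<lambda>x. b * e3 x) (\<lambda>x. (- c) * e3 x) (\<lambda>x. a * e3 x) \<in> Forms 2 (gS 1)"
      unfolding F2g1 by blast
    ultimately show "z \<in> spencer ` Forms 2 (gS 1)" by blast
  qed
qed

lemma fdim_g1: "fdim (gS 1) = 1"
proof (rule fdim1[where ba = e3 and pa = "((3,0,0),0)"])
  show "e3 \<in> gS 1" unfolding gS1_char by (rule exI[of _ 1]) simp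
  show "\<And>v. v \<in> gS 1 \<Longrightarrow> \<exists>k1. v = (\<lambda>x. k1 * e3 x)" using gS1_char by blast
qed simp

lemma fdim_F2g1: "fdim (Forms 2 (gS 1)) = 3"
proof (rule fdim3[where ba = "mk2 e3 (\<lambda>x. 0) (\<lambda>x. 0)" and bb = "mk2 (\<lambda>x. 0) e3 (\<lambda>x. 0)"
      and bc = "mk2 (\<lambda>x. 0) (\<lambda>x. 0) e3" and pa = "({0,1},(3,0,0),0)" and pb = "({0,2},(3,0,0),0)"
      and pc = "({1,2},(3,0,0),0)"])
  show "mk2 e3 (\<lambda>x. 0) (\<lambda>x. 0) \<in> Forms 2 (gS 1)" unfolding F2g1
    by (rule exI[of _ 1], rule exI[of _ 0], rule exI[of _ 0]) simp
  show "mk2 (\<lambda>x. 0) e3 (\<lambda>x. 0) \<in> Forms 2 (gS 1)" unfolding F2g1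
    by (rule exI[of _ 0], rule exI[of _ 1], rule exI[of _ 0]) simp
  show "mk2 (\<lambda>x. 0) (\<lambda>x. 0) e3 \<in> Forms 2 (gS 1)" unfolding F2g1
    by (rule exI[of _ 0], rule exI[of _ 0], rule exI[of _ 1]) simp
  fix v assume "v \<in> Forms 2 (gS 1)"
  then obtain k0 k1 k2 where v: "v = mk2 (\<lambda>x. k0 * e3 x) (\<lambda>x. k1 * e3 x) (\<lambda>x. k2 * e3 x)"
    unfolding F2g1 by blast
  show "\<exists>k1 k2 k3. v = (\<lambda>x. k1 * mk2 e3 (\<lambda>x. 0) (\<lambda>x. 0) x + k2 * mk2 (\<lambda>x. 0) e3 (\<lambda>x. 0) x + k3 * mk2 (\<lambda>x. 0) (\<lambda>x. 0) e3 x)"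
    by (rule exI[of _ k0], rule exI[of _ k1], rule exI[of _ k2]) (rule form_eqI, simp add: v)
qed simp_all

lemma fdim_F3g0: "fdim (Forms 3 (gS 0)) = 3"
proof (rule fdim3[where ba = "mk3 f1" and bb = "mk3 f2" and bc = "mk3 f3"
      and pa = "({0,1,2},(2,0,0),0)" and pb = "({0,1,2},(1,1,0),0)" and pc = "({0,1,2},(1,0,1),0)"])
  show "mk3 f1 \<in> Forms 3 (gS 0)" unfolding F3g0
    by (rule exI[of _ 1], rule exI[of _ 0], rule exI[of _ 0]) simp
  show "mk3 f2 \<in> Forms 3 (gS 0)" unfolding F3g0
    by (rule exI[of _ 0], rule exI[of _ 1], rule exI[of _ 0]) simp
  show "mk3 f3 \<in> Forms 3 (gS 0)" unfolding F3g0
    by (rule exI[of _ 0], rule exI[of _ 0], rule exI[of _ 1]) simp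
  fix v assume "v \<in> Forms 3 (gS 0)"
  then obtain a b c where v: "v = mk3 (\<lambda>x. a * f1 x + b * f2 x + c * f3 x)"
    unfolding F3g0 by blast
  show "\<exists>k1 k2 k3. v = (\<lambda>x. k1 * mk3 f1 x + k2 * mk3 f2 x + k3 * mk3 f3 x)"
    by (rule exI[of _ a], rule exI[of _ b], rule exI[of _ c]) (rule form_eqI, simp add: v)
qed simp_all


lemma spencer_zero[simp]: "spencer 0 = 0"
  by (rule ext) (simp add: spencer_def split: prod.splits)

lemma zero_Forms: "(0::jet) \<in> V \<Longrightarrow> (0::form) \<in> Forms j V"
proof (rule Forms_intro)
  fix I :: "nat set" assume "(0::jet) \<in> V"
  moreover have "comp 0 I = 0" by (rule ext) (simp add: comp_def split: prod.splits)
  ultimately show "comp 0 I \<in> V" by simp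
qed simp

lemma Forms_zero_set: assumes "\<omega> \<in> Forms j {0}" shows "\<omega> = 0"
proof (rule form_eqI)
  fix I \<mu> c
  show "\<omega> (I,\<mu>,c) = 0 (I,\<mu>,c)"
  proof (cases "I \<subseteq> {0,1,2} \<and> card I = j")
    case True
    then have "comp \<omega> I = 0" using Forms_comp[OF assms] by blast
    then show ?thesis by (metis (no_types, lifting) case_prod_conv comp_def zero_fun_apply)
  next
    case False then show ?thesis using Forms_zero[OF assms] by simp
  qed
qed

lemma exact_zero_mid: "(0::jet) \<in> Gin \<Longrightarrow> delta_exact_at j Gin {0}"
  unfolding delta_exact_at_def using Forms_zero_set zero_Forms spencer_zero by metis

lemma not_exact3: assumes "e3 \<in> G" shows "\<not> delta_exact_at 3 {0} G"
proof
  assume h: "delta_exact_at 3 {0} G"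
  have m: "mk3 e3 \<in> Forms 3 G" unfolding Forms3_iff using assms by blast
  have "spencer (mk3 e3) = 0" by (rule spencer_mk3)
  then obtain \<theta> where "\<theta> \<in> Forms 2 {0}" "spencer \<theta> = mk3 e3"
    using h m unfolding delta_exact_at_def by auto
  then have "spencer 0 = mk3 e3" using Forms_zero_set by blast
  then have "spencer 0 ({0,1,2},(3,0,0),0) = mk3 e3 ({0,1,2},(3,0,0),0)" by simp
  then show False by simp
qed

lemma e3_g1: "e3 \<in> gS 1" unfolding gS1_char by (rule exI[of _ 1]) simp

lemma not_inv_g0: "\<not> involutive 1 2 (gS 0)"
proof
  assume "involutive 1 2 (gS 0)"
  then have H: "\<forall>r j. 1 \<le> j \<and> j \<le> 3 \<longrightarrow> delta_exact_at j (prol 1 2 (gS 0) (Suc r)) (prol 1 2 (gS 0) r)"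
    unfolding involutive_def acyclic_def by blast
  have "delta_exact_at 3 (prol 1 2 (gS 0) (Suc 1)) (prol 1 2 (gS 0) 1)"
    by (rule H[rule_format]) simp
  moreover have "prol 1 2 (gS 0) (Suc 1) = {0}" using prol_gS[of 2 0 "Suc 1"] gS_zero[of 2] by simp
  moreover have "prol 1 2 (gS 0) 1 = gS 1" using prol_gS[of 2 0 1] by simp
  ultimately show False using not_exact3[OF e3_g1] by simp
qed

lemma not_inv_g1: "\<not> involutive 1 3 (gS 1)"
proof
  assume "involutive 1 3 (gS 1)"
  then have H: "\<forall>r j. 1 \<le> j \<and> j \<le> 3 \<longrightarrow> delta_exact_at j (prol 1 3 (gS 1) (Suc r)) (prol 1 3 (gS 1) r)"
    unfolding involutive_def acyclic_def by blast
  have "delta_exact_at 3 (prol 1 3 (gS 1) (Suc 0)) (prol 1 3 (gS 1) 0)"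
    by (rule H[rule_format]) simp
  moreover have "prol 1 3 (gS 1) (Suc 0) = {0}" using prol_gS[of 3 1 "Suc 0"] gS_zero[of 2] by simp
  moreover have "prol 1 3 (gS 1) 0 = gS 1" using prol_gS[of 3 1 0] by simp
  ultimately show False using not_exact3[OF e3_g1] by simp
qed

lemma exact1_g1: "delta_exact_at 1 {0} (gS 1)"
  unfolding delta_exact_at_def
proof (intro ballI impI)
  fix \<omega> assume "\<omega> \<in> Forms 1 (gS 1)" and s: "spencer \<omega> = 0"
  then obtain k0 k1 k2 where w: "\<omega> = mk1 (\<lambda>x. k0 * e3 x) (\<lambda>x. k1 * e3 x) (\<lambda>x. k2 * e3 x)"
    unfolding Forms1_iff gS1_char by blast
  from s have "spencer \<omega> ({0,1},(2,0,0),0) = 0" "spencer \<omega> ({0,2},(2,0,0),0) = 0"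
     "spencer \<omega> ({0,1},(1,0,1),0) = 0" by simp_all
  then have "k1 = 0" "k2 = 0" "k0 = 0" unfolding w spencer_mk1 by simp_all
  then have "\<omega> = 0" unfolding w by (intro form_eqI) simp
  then show "\<exists>\<theta>\<in>Forms (1 - 1) {0}. spencer \<theta> = \<omega>" by (intro bexI[of _ 0]) (simp_all add: zero_Forms)
qed

lemma exact2_g1: "delta_exact_at 2 {0} (gS 1)"
  unfolding delta_exact_at_def
proof (intro ballI impI)
  fix \<omega> assume "\<omega> \<in> Forms 2 (gS 1)" and s: "spencer \<omega> = 0"
  then obtain k0 k1 k2 where w: "\<omega> = mk2 (\<lambda>x. k0 * e3 x) (\<lambda>x. k1 * e3 x) (\<lambda>x. k2 * e3 x)"
    unfolding F2g1 by blast
  from s have "mk3 (\<lambda>x. k2 * f1 x + k0 * f2 x + (- k1) * f3 x) = 0" unfolding w sp_F2g1 .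
  then have "mk3 (\<lambda>x. k2 * f1 x + k0 * f2 x + (- k1) * f3 x) ({0,1,2},(2,0,0),0) = 0"
    "mk3 (\<lambda>x. k2 * f1 x + k0 * f2 x + (- k1) * f3 x) ({0,1,2},(1,1,0),0) = 0"
    "mk3 (\<lambda>x. k2 * f1 x + k0 * f2 x + (- k1) * f3 x) ({0,1,2},(1,0,1),0) = 0" by simp_all
  then have "k2 = 0" "k0 = 0" "k1 = 0" by simp_all
  then have "\<omega> = 0" unfolding w by (intro form_eqI) simp
  then show "\<exists>\<theta>\<in>Forms (2 - 1) {0}. spencer \<theta> = \<omega>" by (intro bexI[of _ 0]) (simp_all add: zero_Forms)
qed

lemma acyc_g1: "acyclic 2 1 3 (gS 1)"
  unfolding acyclic_def
proof (intro allI impI)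
  fix r j :: nat assume j: "1 \<le> j \<and> j \<le> 2"
  have a: "prol 1 3 (gS 1) (Suc r) = {0}" using prol_gS[of 3 1 "Suc r"] gS_zero[of "1 + Suc r"] by simp
  show "delta_exact_at j (prol 1 3 (gS 1) (Suc r)) (prol 1 3 (gS 1) r)"
  proof (cases r)
    case 0
    then have "prol 1 3 (gS 1) r = gS 1" using prol_gS[of 3 1 0] by simp
    moreover have "j = 1 \<or> j = 2" using j by arith
    ultimately show ?thesis using a exact1_g1 exact2_g1 by auto
  next
    case (Suc r')
    then have "prol 1 3 (gS 1) r = {0}" using prol_gS[of 3 1 r] gS_zero[of "1 + r"] by simp
    then show ?thesis using a exact_zero_mid by simp
  qed
qed




lemma Rsys_Phi: "Rsys [[opP],[opQ],[opR]] 1 2 r = {v \<in> Jsp 1 (2+r). \<forall>\<nu> \<tau>. mdeg \<nu> \<le> r \<and> \<tau> < 3 \<longrightarrow> ph v \<nu> \<tau> = 0}"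
  unfolding Rsys_def by (simp add: opapp_Phi)

lemma ph_cong: "(\<And>\<alpha>. mdeg \<alpha> = 2 \<Longrightarrow> v (\<alpha>+\<nu>,0) = w (\<alpha>+\<nu>,0)) \<Longrightarrow> ph v \<nu> \<tau> = ph w \<nu> \<tau>"
  unfolding ph_def by simp

lemma Jsp_zero: "v \<in> Jsp m k \<Longrightarrow> \<not> (mdeg \<mu> \<le> k \<and> c < m) \<Longrightarrow> v (\<mu>,c) = 0"
  unfolding Jsp_def by blast

lemma JspI: "(\<And>\<mu> c. \<not> (mdeg \<mu> \<le> k \<and> c < m) \<Longrightarrow> v (\<mu>,c) = 0) \<Longrightarrow> v \<in> Jsp m k"
  unfolding Jsp_def by blast

lemma trunc_app[simp]: "trunc k v (\<mu>,c) = (if mdeg \<mu> \<le> k then v (\<mu>,c) else 0)"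
  by (simp add: trunc_def)

lemma FI: "formally_integrable [[opP],[opQ],[opR]] 1 2"
  unfolding formally_integrable_def
proof (intro allI set_eqI iffI)
  fix r w
  assume "w \<in> trunc (2 + r) ` Rsys [[opP],[opQ],[opR]] 1 2 (Suc r)"
  then obtain v where w: "w = trunc (2+r) v" and v: "v \<in> Jsp 1 (2 + Suc r)"
    "\<And>\<nu> \<tau>. mdeg \<nu> \<le> Suc r \<Longrightarrow> \<tau> < 3 \<Longrightarrow> ph v \<nu> \<tau> = 0"
    unfolding Rsys_Phi by blast
  have "w \<in> Jsp 1 (2+r)"
  proof (rule JspI)
    fix \<mu> and c :: nat assume "\<not> (mdeg \<mu> \<le> 2 + r \<and> c < 1)"
    then show "w (\<mu>,c) = 0" using Jsp_zero[OF v(1), of \<mu> c] by (auto simp: w)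
  qed
  moreover have "ph w \<nu> \<tau> = 0" if "mdeg \<nu> \<le> r" "\<tau> < 3" for \<nu> \<tau>
  proof -
    have "ph w \<nu> \<tau> = ph v \<nu> \<tau>" by (rule ph_cong) (use that in \<open>simp add: w\<close>)
    then show ?thesis using v(2)[of \<nu> \<tau>] that by simp
  qed
  ultimately show "w \<in> Rsys [[opP],[opQ],[opR]] 1 2 r" unfolding Rsys_Phi by blast
next
  fix r w
  assume "w \<in> Rsys [[opP],[opQ],[opR]] 1 2 r"
  then have w: "w \<in> Jsp 1 (2 + r)" "\<And>\<nu> \<tau>. mdeg \<nu> \<le> r \<Longrightarrow> \<tau> < 3 \<Longrightarrow> ph w \<nu> \<tau> = 0"
    unfolding Rsys_Phi by blast+
  have "w \<in> Jsp 1 (2 + Suc r)"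
  proof (rule JspI)
    fix \<mu> and c :: nat assume "\<not> (mdeg \<mu> \<le> 2 + Suc r \<and> c < 1)"
    then show "w (\<mu>,c) = 0" using Jsp_zero[OF w(1), of \<mu> c] by auto
  qed
  moreover have "ph w \<nu> \<tau> = 0" if "mdeg \<nu> \<le> Suc r" "\<tau> < 3" for \<nu> \<tau>
  proof (cases "mdeg \<nu> \<le> r")
    case True then show ?thesis using w(2) that by blast
  next
    case False
    then have "ph w \<nu> \<tau> = ph 0 \<nu> \<tau>" by (intro ph_cong) (use Jsp_zero[OF w(1)] in auto)
    then show ?thesis by (simp add: ph_def)
  qed
  ultimately have "w \<in> Rsys [[opP],[opQ],[opR]] 1 2 (Suc r)" unfolding Rsys_Phi by blast
  moreover have "trunc (2 + r) w = w"
    by (rule jet_eqI) (use Jsp_zero[OF w(1)] in auto)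
  ultimately show "w \<in> trunc (2 + r) ` Rsys [[opP],[opQ],[opR]] 1 2 (Suc r)" by (metis image_eqI)
qed




lemma lookup_mult_dop_gen: "Poly_Mapping.lookup (f * dop \<nu>) \<mu> = (\<Sum>l. Poly_Mapping.lookup f l when \<mu> = l + \<nu>)"
proof -
  have "Poly_Mapping.lookup (f * dop \<nu>) \<mu> =
     (\<Sum>l. Poly_Mapping.lookup f l * (\<Sum>q. Poly_Mapping.lookup (dop \<nu>) q when \<mu> = l + q))"
    by (rule lookup_mult)
  also have "\<dots> = (\<Sum>l. Poly_Mapping.lookup f l * (1 when \<mu> = l + \<nu>))"
  proof -
    have "(\<Sum>q. Poly_Mapping.lookup (dop \<nu>) q when \<mu> = l + q) = (1 when \<mu> = l + \<nu>)" for l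
    proof -
      have "(\<Sum>q. Poly_Mapping.lookup (dop \<nu>) q when \<mu> = l + q) = (\<Sum>q. (1 when \<mu> = l + q) when \<nu> = q)"
        by (rule Sum_any.cong) (simp add: dop_def lookup_single when_def)
      also have "\<dots> = (1 when \<mu> = l + \<nu>)" by (rule Sum_any_when_equal')
      finally show ?thesis .
    qed
    then show ?thesis by simp
  qed
  also have "\<dots> = (\<Sum>l. Poly_Mapping.lookup f l when \<mu> = l + \<nu>)"
    by (simp add: mult_when)
  finally show ?thesis .
qed

lemma lookup_mult_dop1[simp]: "Poly_Mapping.lookup (f * dop \<nu>) (\<rho> + \<nu>) = Poly_Mapping.lookup f \<rho>"
proof -
  have "(\<Sum>l. Poly_Mapping.lookup f l when \<rho> + \<nu> = l + \<nu>) = (\<Sum>l. Poly_Mapping.lookup f l when l = \<rho>)"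
    by (rule Sum_any.cong) (auto simp: when_def)
  then show ?thesis by (simp add: lookup_mult_dop_gen)
qed

lemma lookup_mult_dop2: "(\<And>\<rho>. \<mu> \<noteq> \<rho> + \<nu>) \<Longrightarrow> Poly_Mapping.lookup (f * dop \<nu>) \<mu> = 0"
  by (simp add: lookup_mult_dop_gen when_def)

lemma dop_nzd: "f * dop \<nu> = 0 \<Longrightarrow> f = 0"
  by (metis lookup_mult_dop1 lookup_zero poly_mapping_eqI)

lemma inj_add_mi: "inj (\<lambda>\<rho>::mi. \<rho> + \<nu>)"
  by (rule injI) simp

lemma fin_shift: "finite {\<rho>::mi. P \<rho> \<and> Poly_Mapping.lookup X (\<rho> + \<nu>) \<noteq> 0}"
proof -
  have "{\<rho>. P \<rho> \<and> Poly_Mapping.lookup X (\<rho> + \<nu>) \<noteq> 0} \<subseteq> (\<lambda>\<rho>. \<rho> + \<nu>) -` Poly_Mapping.keys X"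
    by (auto simp: in_keys_iff)
  moreover have "finite ((\<lambda>\<rho>. \<rho> + \<nu>) -` Poly_Mapping.keys X)"
    by (rule finite_vimageI) (simp_all add: inj_add_mi)
  ultimately show ?thesis by (rule finite_subset)
qed

definition quo :: "(mi \<Rightarrow> bool) \<Rightarrow> D \<Rightarrow> mi \<Rightarrow> D" where
  "quo P X \<nu> = Abs_poly_mapping (\<lambda>\<rho>. if P \<rho> then Poly_Mapping.lookup X (\<rho> + \<nu>) else 0)"

lemma lookup_quo: "Poly_Mapping.lookup (quo P X \<nu>) \<rho> = (if P \<rho> then Poly_Mapping.lookup X (\<rho> + \<nu>) else 0)"
proof -
  have "{\<rho>. (if P \<rho> then Poly_Mapping.lookup X (\<rho> + \<nu>) else 0) \<noteq> 0} = {\<rho>. P \<rho> \<and> Poly_Mapping.lookup X (\<rho> + \<nu>) \<noteq> 0}"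
    by auto
  then have "finite {\<rho>. (if P \<rho> then Poly_Mapping.lookup X (\<rho> + \<nu>) else 0) \<noteq> 0}"
    using fin_shift by simp
  then show ?thesis unfolding quo_def by simp
qed

lemma mono_div: assumes "\<And>\<mu>. (\<And>\<rho>. \<mu> \<noteq> \<rho> + \<nu>) \<Longrightarrow> Poly_Mapping.lookup X \<mu> = 0"
  shows "X = quo (\<lambda>_. True) X \<nu> * dop \<nu>"
proof (rule poly_mapping_eqI)
  fix \<mu>
  show "Poly_Mapping.lookup X \<mu> = Poly_Mapping.lookup (quo (\<lambda>_. True) X \<nu> * dop \<nu>) \<mu>"
  proof (cases "\<exists>\<rho>. \<mu> = \<rho> + \<nu>")
    case True
    then obtain \<rho> where "\<mu> = \<rho> + \<nu>" by blast
    then show ?thesis by (simp add: lookup_quo)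
  next
    case False
    then show ?thesis using assms lookup_mult_dop2 by metis
  qed
qed


lemma lookup_mult_dop3: "Poly_Mapping.lookup (f * dop (x,y,z)) (a,b,c) =
   (if x \<le> a \<and> y \<le> b \<and> z \<le> c then Poly_Mapping.lookup f (a-x,b-y,c-z) else 0)"
proof (cases "x \<le> a \<and> y \<le> b \<and> z \<le> c")
  case True
  then have "(a,b,c) = (a-x,b-y,c-z) + (x,y,z)" by simp
  then show ?thesis using True by (metis lookup_mult_dop1)
next
  case False
  have "(a,b,c) \<noteq> \<rho> + (x,y,z)" for \<rho>
    using False by (cases \<rho>) auto
  then have "Poly_Mapping.lookup (f * dop (x,y,z)) (a,b,c) = 0" by (rule lookup_mult_dop2)
  with False show ?thesis by auto
qed

lemma SucSuc_diff2[simp]: "2 \<le> n \<Longrightarrow> Suc (Suc (n - 2)) = n" by arith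

lemma opQ_split: "f * opQ = f * dop (0,1,1) - f * dop (2,0,0)"
  by (simp add: opQ_def algebra_simps)

lemma lookup_mult_opQ: "Poly_Mapping.lookup (f * opQ) (a,b,c) =
   (if 1 \<le> b \<and> 1 \<le> c then Poly_Mapping.lookup f (a,b-1,c-1) else 0)
   - (if 2 \<le> a then Poly_Mapping.lookup f (a-2,b,c) else 0)"
  by (simp add: opQ_split lookup_minus lookup_mult_dop3 del: One_nat_def)

lemma coprimePR: assumes "X * opP + Y * opR = 0" shows "\<exists>s. X = s * opR \<and> Y = - (s * opP)"
proof -
  have XP: "X * opP = - (Y * opR)" using assms by (simp add: eq_neg_iff_add_eq_0)
  have z: "Poly_Mapping.lookup X \<mu> = 0" if "\<And>\<rho>. \<mu> \<noteq> \<rho> + (0,0,2)" for \<mu>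
  proof -
    obtain a b c where m: "\<mu> = (a,b,c)" by (cases \<mu>)
    have "c < 2" using that[of "(a,b,c-2)"] m by (cases "c < 2") auto
    have "Poly_Mapping.lookup X \<mu> = Poly_Mapping.lookup (X * opP) (a,b+2,c)"
      by (simp add: opP_def lookup_mult_dop3 m)
    also have "\<dots> = 0" using \<open>c < 2\<close> by (simp add: XP opR_def lookup_mult_dop3)
    finally show ?thesis .
  qed
  define s where "s = quo (\<lambda>_. True) X (0,0,2)"
  have X: "X = s * opR" unfolding s_def opR_def by (rule mono_div) (rule z)
  have "(Y + s * opP) * opR = Y * opR + X * opP" by (simp add: X algebra_simps)
  also have "\<dots> = 0" using assms by (simp add: algebra_simps)
  finally have "Y + s * opP = 0" unfolding opR_def by (rule dop_nzd)
  then have "Y = - (s * opP)" by (simp add: eq_neg_iff_add_eq_0)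
  with X show ?thesis by blast
qed

lemma syz1: assumes "c0 * opP + c1 * opQ + c2 * opR = 0"
  shows "\<exists>\<alpha> \<beta> s. c0 = s * opR - \<alpha> * opQ \<and> c1 = \<alpha> * opP + \<beta> * opR \<and> c2 = - (s * opP) - \<beta> * opQ"
proof -
  define Z where "Z = c0 * opP + c2 * opR"
  have cQ: "c1 * opQ = - Z" using assms unfolding Z_def by (simp add: eq_neg_iff_add_eq_0 algebra_simps)
  have Zz: "Poly_Mapping.lookup Z (a,b,c) = 0" if "b < 2" "c < 2" for a b c
    using that by (simp add: Z_def lookup_add opP_def opR_def lookup_mult_dop3)
  have s1: "Poly_Mapping.lookup c1 (a,b,c) = 0" if "b < 2" "c < 2" "\<not> (b = 1 \<and> c = 1)" for a b c
  proof -
    have "Poly_Mapping.lookup (c1 * opQ) (a+2,b,c) = 0" using Zz[of b c "a+2"] that by (simp add: cQ)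
    moreover have "\<not> (1 \<le> b \<and> 1 \<le> c)" using that by arith
    ultimately show ?thesis by (simp add: lookup_mult_opQ del: One_nat_def)
  qed
  have c1z: "Poly_Mapping.lookup c1 (a,b,c) = 0" if "b < 2" "c < 2" for a b c
  proof (cases "b = 1 \<and> c = 1")
    case True
    have "Poly_Mapping.lookup (c1 * opQ) (a+2,b,c) = 0" using Zz[of b c "a+2"] that by (simp add: cQ)
    then have "Poly_Mapping.lookup c1 (a+2,0,0) - Poly_Mapping.lookup c1 (a,b,c) = 0"
      using True by (simp add: lookup_mult_opQ)
    moreover have "Poly_Mapping.lookup c1 (a+2,0,0) = 0" by (rule s1) simp_all
    ultimately show ?thesis by simp
  next
    case False then show ?thesis using s1 that by blast
  qed
  define \<alpha> where "\<alpha> = quo (\<lambda>_. True) c1 (0,2,0)"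
  define \<beta> where "\<beta> = quo (\<lambda>\<rho>. fst (snd \<rho>) < 2) c1 (0,0,2)"
  have c1: "c1 = \<alpha> * opP + \<beta> * opR"
  proof (rule poly_mapping_eqI)
    fix \<mu> :: mi
    obtain a b c where m: "\<mu> = (a,b,c)" by (cases \<mu>)
    show "Poly_Mapping.lookup c1 \<mu> = Poly_Mapping.lookup (\<alpha> * opP + \<beta> * opR) \<mu>"
      using c1z[of b c a] by (auto simp: m lookup_add opP_def opR_def lookup_mult_dop3 \<alpha>_def \<beta>_def lookup_quo)
  qed
  have "(c0 + \<alpha> * opQ) * opP + (c2 + \<beta> * opQ) * opR = c0 * opP + c1 * opQ + c2 * opR"
    by (simp add: c1 algebra_simps)
  also have "\<dots> = 0" by (rule assms)
  finally obtain s where s: "c0 + \<alpha> * opQ = s * opR" "c2 + \<beta> * opQ = - (s * opP)"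
    using coprimePR by blast
  have "c0 = s * opR - \<alpha> * opQ" using s(1) by (simp add: algebra_simps)
  moreover have "c2 = - (s * opP) - \<beta> * opQ" using s(2) by (simp add: algebra_simps)
  ultimately show ?thesis using c1 by blast
qed

lemma syz2: assumes "- (c0 * opR) + c2 * opP = 0" "c0 * opQ - c1 * opP = 0"
  shows "\<exists>s. c0 = s * opP \<and> c1 = s * opQ \<and> c2 = s * opR"
proof -
  have "c2 * opP + (- c0) * opR = 0" using assms(1) by (simp add: algebra_simps)
  then obtain s where s: "c2 = s * opR" "- c0 = - (s * opP)" using coprimePR by blast
  then have c0: "c0 = s * opP" by simp
  have "(s * opQ - c1) * opP = 0" using assms(2) by (simp add: c0 algebra_simps)
  then have "s * opQ - c1 = 0" unfolding opP_def by (rule dop_nzd)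
  then show ?thesis using c0 s(1) by (intro exI[of _ s]) simp
qed

lemma opP_nzd: "c * opP = 0 \<Longrightarrow> c = 0"
  unfolding opP_def by (rule dop_nzd)


lemma sum3: "(\<Sum>i<(3::nat). f i) = f 0 + f 1 + (f 2 :: D)"
  by (simp add: eval_nat_numeral del: two_Suc)

lemma sum1: "(\<Sum>i<(1::nat). f i) = (f 0 :: D)"
  by simp

lemma upt3: "[0..<3] = [0,1,2]" by (simp add: eval_nat_numeral del: two_Suc)

lemma len3: "length xs = 3 \<Longrightarrow> \<exists>a b c. xs = [a,b,c]"
  by (simp add: eval_nat_numeral length_Suc_conv del: two_Suc) blast

lemma len1: "length xs = 1 \<Longrightarrow> \<exists>a. xs = [a]"
  by (simp add: length_Suc_conv)

lemma rowmul_Phi: "rowmul [c0,c1,c2] [[opP],[opQ],[opR]] 1 = [c0 * opP + c1 * opQ + c2 * opR]"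
  by (simp add: rowmul_def sum3)

lemma rowmul_Psi: "rowmul [c0,c1,c2] [[0, - opR, opQ], [opR, 0, - opP], [- opQ, opP, 0]] 3 =
   [c1 * opR - c2 * opQ, - (c0 * opR) + c2 * opP, c0 * opQ - c1 * opP]"
  by (simp add: rowmul_def sum3 upt3)

lemma rowmul_Omega: "rowmul [c0] [[opP, opQ, opR]] 3 = [c0 * opP, c0 * opQ, c0 * opR]"
  by (simp add: rowmul_def upt3)

lemma gcc1: "generates_cc [[0, - opR, opQ], [opR, 0, - opP], [- opQ, opP, 0]] [[opP],[opQ],[opR]] 1"
  unfolding generates_cc_def
proof (intro conjI ballI allI impI)
  fix b assume "b \<in> set [[0, - opR, opQ], [opR, 0, - opP], [- opQ, opP, 0]]"
  then show "rowmul b [[opP],[opQ],[opR]] 1 = replicate 1 0"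
    by (auto simp del: One_nat_def simp: rowmul_Phi algebra_simps) simp_all
next
  fix c assume h: "length c = length [[opP],[opQ],[opR]] \<and> rowmul c [[opP],[opQ],[opR]] 1 = replicate 1 0"
  then obtain c0 c1 c2 where c: "c = [c0,c1,c2]" using len3 by force
  have "c0 * opP + c1 * opQ + c2 * opR = 0" using h unfolding c rowmul_Phi by simp
  then obtain \<alpha> \<beta> s where e: "c0 = s * opR - \<alpha> * opQ" "c1 = \<alpha> * opP + \<beta> * opR" "c2 = - (s * opP) - \<beta> * opQ"
    using syz1 by blast
  show "\<exists>l. length l = length [[0, - opR, opQ], [opR, 0, - opP], [- opQ, opP, 0]] \<and>
      c = rowmul l [[0, - opR, opQ], [opR, 0, - opP], [- opQ, opP, 0]] (length [[opP],[opQ],[opR]])"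
    by (rule exI[of _ "[- \<beta>, s, \<alpha>]"]) (simp add: rowmul_Psi c e algebra_simps)
qed

lemma gcc2: "generates_cc [[opP, opQ, opR]] [[0, - opR, opQ], [opR, 0, - opP], [- opQ, opP, 0]] 3"
  unfolding generates_cc_def
proof (intro conjI ballI allI impI)
  fix b assume "b \<in> set [[opP, opQ, opR]]"
  then have b: "b = [opP, opQ, opR]" by simp
  show "rowmul b [[0, - opR, opQ], [opR, 0, - opP], [- opQ, opP, 0]] 3 = replicate 3 0"
    apply (simp only: b rowmul_Psi)
    apply (simp add: algebra_simps eval_nat_numeral del: two_Suc)
    done
next
  fix c assume h: "length c = length [[0, - opR, opQ], [opR, 0, - opP], [- opQ, opP, 0]] \<and>
     rowmul c [[0, - opR, opQ], [opR, 0, - opP], [- opQ, opP, 0]] 3 = replicate 3 0"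
  then obtain c0 c1 c2 where c: "c = [c0,c1,c2]" using len3 by force
  have "- (c0 * opR) + c2 * opP = 0" "c0 * opQ - c1 * opP = 0"
    using h unfolding c rowmul_Psi by (simp_all add: eval_nat_numeral del: two_Suc)
  then obtain s where e: "c0 = s * opP" "c1 = s * opQ" "c2 = s * opR" using syz2 by blast
  show "\<exists>l. length l = length [[opP, opQ, opR]] \<and>
      c = rowmul l [[opP, opQ, opR]] (length [[0, - opR, opQ], [opR, 0, - opP], [- opQ, opP, 0]])"
    by (rule exI[of _ "[s]"]) (simp add: rowmul_Omega c e)
qed

lemma gcc3: "generates_cc [] [[opP, opQ, opR]] 3"
  unfolding generates_cc_def
proof (intro conjI ballI allI impI)
  fix c assume h: "length c = length [[opP, opQ, opR]] \<and> rowmul c [[opP, opQ, opR]] 3 = replicate 3 0"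
  then obtain c0 where c: "c = [c0]" using len1 by force
  have "c0 * opP = 0" using h unfolding c rowmul_Omega by (simp add: eval_nat_numeral del: two_Suc)
  then have "c0 = 0" by (rule opP_nzd)
  then show "\<exists>l. length l = length [] \<and> c = rowmul l [] (length [[opP, opQ, opR]])"
    by (simp add: c rowmul_def)
qed simp

lemma fexact: "formally_exact [1, 3, 3, 1, 0]
   [[[opP],[opQ],[opR]], [[0, - opR, opQ], [opR, 0, - opP], [- opQ, opP, 0]], [[opP, opQ, opR]], []]"
  unfolding formally_exact_def
proof (intro conjI allI impI)
  show "length [1, 3, 3, 1, 0::nat] = Suc (length [[[opP],[opQ],[opR]], [[0, - opR, opQ], [opR, 0, - opP], [- opQ, opP, 0]], [[opP, opQ, opR]], []])"
    by simp
next
  fix i assume "i < length [[[opP],[opQ],[opR]], [[0, - opR, opQ], [opR, 0, - opP], [- opQ, opP, 0]], [[opP, opQ, opR]], []]"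
  then have "i = 0 \<or> i = 1 \<or> i = 2 \<or> i = 3" by auto
  then show "is_matrix ([1, 3, 3, 1, 0] ! Suc i) ([1, 3, 3, 1, 0] ! i)
     ([[[opP],[opQ],[opR]], [[0, - opR, opQ], [opR, 0, - opP], [- opQ, opP, 0]], [[opP, opQ, opR]], []] ! i)"
    by (elim disjE) (simp_all add: is_matrix_def)
next
  fix i assume "Suc i < length [[[opP],[opQ],[opR]], [[0, - opR, opQ], [opR, 0, - opP], [- opQ, opP, 0]], [[opP, opQ, opR]], []]"
  then have "i = 0 \<or> i = 1 \<or> i = 2" by auto
  then show "generates_cc ([[[opP],[opQ],[opR]], [[0, - opR, opQ], [opR, 0, - opP], [- opQ, opP, 0]], [[opP, opQ, opR]], []] ! Suc i)
     ([[[opP],[opQ],[opR]], [[0, - opR, opQ], [opR, 0, - opP], [- opQ, opP, 0]], [[opP, opQ, opR]], []] ! i) ([1, 3, 3, 1, 0] ! i)"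
    using gcc1 gcc2 gcc3 by (elim disjE) simp_all
qed




abbreviation sig :: "nat \<Rightarrow> jet \<Rightarrow> jet" where
  "sig t \<equiv> symbol_map [[opP],[opQ],[opR]] t"

lemma sig_app[simp]: "sig t v (\<nu>,\<tau>) = (if mdeg \<nu> = t then ph v \<nu> \<tau> else 0)"
  by (simp add: symbol_map_def opapp_Phi)

lemma sig_Ssp: "v \<in> Ssp 1 (2+t) \<Longrightarrow> sig t v \<in> Ssp 3 t"
  by (rule SspI) (auto simp: ph_def)

lemma shift_shift: "shiftj \<nu> (shiftj \<nu>' v) = shiftj (\<nu> + \<nu>') v"
  by (rule jet_eqI) (simp add: add.assoc)

lemma shift_comm: "shiftj \<nu> (shiftj \<nu>' v) = shiftj \<nu>' (shiftj \<nu> v)"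
  by (simp add: shift_shift add.commute)

lemma shift_diff: "shiftj \<nu> (x - y) = shiftj \<nu> x - shiftj \<nu> y"
  by (rule jet_eqI) simp

lemma shift_add: "shiftj \<nu> (x + y) = shiftj \<nu> x + shiftj \<nu> y"
  by (rule jet_eqI) simp

lemma shift_zero[simp]: "shiftj \<nu> 0 = 0"
  by (rule jet_eqI) simp

lemma ph_shift: "ph (shiftj \<nu> v) \<mu> \<tau> = ph v (\<mu> + \<nu>) \<tau>"
  by (simp add: ph_def add.assoc)

lemma sig_shift: "mdeg \<nu> = d \<Longrightarrow> shiftj \<nu> (sig (t + d) v) = sig t (shiftj \<nu> v)"
  by (rule jet_eqI) (auto simp: ph_shift)

lemma sig_diff: "sig t (x - y) = sig t x - sig t y"
  by (rule jet_eqI) (simp add: ph_def)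

lemma sig_add: "sig t (x + y) = sig t x + sig t y"
  by (rule jet_eqI) (simp add: ph_def)

lemma sig_zero[simp]: "sig t 0 = 0"
  by (rule jet_eqI) (simp add: ph_def)

lemma Ssp_diff: "x \<in> Ssp m k \<Longrightarrow> y \<in> Ssp m k \<Longrightarrow> x - y \<in> Ssp m k"
  by (rule SspI) (simp add: Ssp_zero)

lemma Ssp_add: "x \<in> Ssp m k \<Longrightarrow> y \<in> Ssp m k \<Longrightarrow> x + y \<in> Ssp m k"
  by (rule SspI) (simp add: Ssp_zero)

lemma Ssp_0[simp]: "0 \<in> Ssp m k"
  by (rule SspI) simp

lemma sig_ker: assumes "x \<in> Ssp 1 (2+t)" "sig t x = 0" shows "x \<in> gS t"
proof -
  have "eqs x \<nu>" if "mdeg \<nu> = t" for \<nu>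
  proof -
    have "\<forall>\<tau><3. ph x \<nu> \<tau> = 0"
    proof (intro allI impI)
      fix \<tau> :: nat assume "\<tau> < 3"
      have "sig t x (\<nu>,\<tau>) = 0" using assms(2) by simp
      then show "ph x \<nu> \<tau> = 0" using that by simp
    qed
    then show ?thesis using ph_eqs by blast
  qed
  then show ?thesis using assms(1) unfolding gS_def by blast
qed

lemma sig_inj: assumes "2 \<le> t" "x \<in> Ssp 1 (2+t)" "y \<in> Ssp 1 (2+t)" "sig t x = sig t y"
  shows "x = y"
proof -
  have "sig t (x - y) = 0" using assms(4) by (simp add: sig_diff)
  then have "x - y \<in> gS t" using sig_ker Ssp_diff assms(2,3) by blast
  then have "x - y = 0" using gS_zero[OF assms(1)] by blast
  then show ?thesis by simp
qed

lemma shift1_Ssp: "v \<in> Ssp m (Suc k) \<Longrightarrow> mdeg \<nu> = 1 \<Longrightarrow> shiftj \<nu> v \<in> Ssp m k"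
  using shift_Ssp[of v m k 1 \<nu>] by simp

lemma det_by_shifts: assumes "x \<in> Ssp m (Suc k)" "y \<in> Ssp m (Suc k)"
  "s0 x = s0 y" "s1 x = s1 y" "s2 x = s2 y"
  shows "x = y"
proof (rule jet_eqI)
  fix \<mu> :: mi and c :: nat
  obtain a b d where m: "\<mu> = (a,b,d)" by (cases \<mu>)
  show "x (\<mu>,c) = y (\<mu>,c)"
  proof (cases "mdeg \<mu> = Suc k \<and> c < m")
    case False then show ?thesis using Ssp_zero assms(1,2) by metis
  next
    case True
    then have "a \<ge> 1 \<or> b \<ge> 1 \<or> d \<ge> 1" using m by auto
    moreover {
      assume "a \<ge> 1"
      then have "\<mu> = (a-1,b,d) + (1,0,0)" using m by simp
      moreover have "s0 x ((a-1,b,d),c) = s0 y ((a-1,b,d),c)" using assms(3) by simp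
      ultimately have ?thesis by simp }
    moreover {
      assume "b \<ge> 1"
      then have "\<mu> = (a,b-1,d) + (0,1,0)" using m by simp
      moreover have "s1 x ((a,b-1,d),c) = s1 y ((a,b-1,d),c)" using assms(4) by simp
      ultimately have ?thesis by simp }
    moreover {
      assume "d \<ge> 1"
      then have "\<mu> = (a,b,d-1) + (0,0,1)" using m by simp
      moreover have "s2 x ((a,b,d-1),c) = s2 y ((a,b,d-1),c)" using assms(5) by simp
      ultimately have ?thesis by simp }
    ultimately show ?thesis by blast
  qed
qed


lemma integrate:
  assumes u: "u0 \<in> Ssp m k" "u1 \<in> Ssp m k" "u2 \<in> Ssp m k"
    and c01: "s1 u0 = s0 u1" and c02: "s2 u0 = s0 u2" and c12: "s2 u1 = s1 u2"
  shows "\<exists>U \<in> Ssp m (Suc k). s0 U = u0 \<and> s1 U = u1 \<and> s2 U = u2"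
proof -
  define U :: jet where "U = (\<lambda>((a,b,d),c). if a + b + d = Suc k \<and> c < m then
     (if a \<ge> 1 then u0 ((a-1,b,d),c) else if b \<ge> 1 then u1 ((a,b-1,d),c)
      else if d \<ge> 1 then u2 ((a,b,d-1),c) else 0) else 0)"
  have e01: "u0 ((a,b+1,d),c) = u1 ((a+1,b,d),c)" for a b d c
    using fun_cong[OF c01, of "((a,b,d),c)"] by simp
  have e02: "u0 ((a,b,d+1),c) = u2 ((a+1,b,d),c)" for a b d c
    using fun_cong[OF c02, of "((a,b,d),c)"] by simp
  have e12: "u1 ((a,b,d+1),c) = u2 ((a,b+1,d),c)" for a b d c
    using fun_cong[OF c12, of "((a,b,d),c)"] by simp
  have z: "x ((a,b,d),c) = 0" if "x \<in> Ssp m k" "\<not> (a + b + d = k \<and> c < m)" for x a b d c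
    using Ssp_zero[OF that(1), of "(a,b,d)" c] that(2) by simp
  have "U \<in> Ssp m (Suc k)"
    by (rule SspI) (auto simp: U_def)
  moreover have "s0 U = u0"
  proof (rule jet_eqI)
    fix \<mu> :: mi and c :: nat
    obtain a b d where m: "\<mu> = (a,b,d)" by (cases \<mu>)
    show "s0 U (\<mu>,c) = u0 (\<mu>,c)" using z[OF u(1), of a b d c] by (auto simp: U_def m)
  qed
  moreover have "s1 U = u1"
  proof (rule jet_eqI)
    fix \<mu> :: mi and c :: nat
    obtain a b d where m: "\<mu> = (a,b,d)" by (cases \<mu>)
    show "s1 U (\<mu>,c) = u1 (\<mu>,c)"
    proof (cases "a \<ge> 1")
      case True
      then have "u0 ((a-1,b+1,d),c) = u1 ((a,b,d),c)" using e01[of "a-1" b d c] by simp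
      then show ?thesis using True z[OF u(2), of a b d c] by (auto simp: U_def m)
    next
      case False
      then show ?thesis using z[OF u(2), of a b d c] by (auto simp: U_def m)
    qed
  qed
  moreover have "s2 U = u2"
  proof (rule jet_eqI)
    fix \<mu> :: mi and c :: nat
    obtain a b d where m: "\<mu> = (a,b,d)" by (cases \<mu>)
    show "s2 U (\<mu>,c) = u2 (\<mu>,c)"
    proof (cases "a \<ge> 1")
      case True
      then have "u0 ((a-1,b,d+1),c) = u2 ((a,b,d),c)" using e02[of "a-1" b d c] by simp
      then show ?thesis using True z[OF u(3), of a b d c] by (auto simp: U_def m)
    next
      case False
      show ?thesis
      proof (cases "b \<ge> 1")
        case True
        then have "u1 ((a,b-1,d+1),c) = u2 ((a,b,d),c)" using e12[of a "b-1" d c] by simp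
        then show ?thesis using True False z[OF u(3), of a b d c] by (auto simp: U_def m)
      next
        case False2: False
        then show ?thesis using False z[OF u(3), of a b d c] by (auto simp: U_def m)
      qed
    qed
  qed
  ultimately show ?thesis by blast
qed

definition I0 :: "jet \<Rightarrow> jet" where
  "I0 x = (\<lambda>((a,b,d),c). if a \<ge> 1 then x ((a-1,b,d),c) else 0)"

lemma s0_I0: "s0 (I0 x) = x"
  by (rule jet_eqI) (auto simp: I0_def)

lemma I0_Ssp: "x \<in> Ssp m k \<Longrightarrow> I0 x \<in> Ssp m (Suc k)"
proof (rule SspI)
  fix \<mu> :: mi and c :: nat
  assume x: "x \<in> Ssp m k" and h: "\<not> (mdeg \<mu> = Suc k \<and> c < m)"
  obtain a b d where m: "\<mu> = (a,b,d)" by (cases \<mu>)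
  show "I0 x (\<mu>,c) = 0"
  proof (cases "a \<ge> 1")
    case True
    then have "\<not> (mdeg (a-1,b,d) = k \<and> c < m)" using h m by auto
    then show ?thesis using Ssp_zero[OF x] True by (simp add: I0_def m)
  qed (simp add: I0_def m)
qed

definition J1 :: "jet \<Rightarrow> jet" where
  "J1 x = (\<lambda>((a,b,d),c). if a = 0 \<and> b \<ge> 1 then x ((a,b-1,d),c) else 0)"

lemma J1_props: assumes "s0 f = 0" shows "s0 (J1 f) = 0" "s1 (J1 f) = f"
proof -
  show "s0 (J1 f) = 0"
  proof (rule jet_eqI)
    fix \<mu> :: mi and c :: nat
    obtain a b d where m: "\<mu> = (a,b,d)" by (cases \<mu>)
    show "s0 (J1 f) (\<mu>,c) = 0 (\<mu>,c)" by (simp add: J1_def m)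
  qed
  have f0: "f ((a,b,d),c) = 0" if "a \<ge> 1" for a b d c
  proof -
    have "s0 f ((a-1,b,d),c) = 0" using assms by simp
    then show ?thesis using that by simp
  qed
  show "s1 (J1 f) = f"
  proof (rule jet_eqI)
    fix \<mu> :: mi and c :: nat
    obtain a b d where m: "\<mu> = (a,b,d)" by (cases \<mu>)
    show "s1 (J1 f) (\<mu>,c) = f (\<mu>,c)" using f0[of a b d c] by (auto simp: J1_def m)
  qed
qed

lemma J1_Ssp: "x \<in> Ssp m k \<Longrightarrow> J1 x \<in> Ssp m (Suc k)"
proof (rule SspI)
  fix \<mu> :: mi and c :: nat
  assume x: "x \<in> Ssp m k" and h: "\<not> (mdeg \<mu> = Suc k \<and> c < m)"
  obtain a b d where m: "\<mu> = (a,b,d)" by (cases \<mu>)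
  show "J1 x (\<mu>,c) = 0"
  proof (cases "a = 0 \<and> b \<ge> 1")
    case True
    then have "\<not> (mdeg (a,b-1,d) = k \<and> c < m)" using h m by auto
    then show ?thesis using Ssp_zero[OF x] True by (simp add: J1_def m)
  qed (auto simp add: J1_def m)
qed




abbreviation "Phi0 \<equiv> [[opP],[opQ],[opR]]"

lemma hsp_eq: "hsp Phi0 1 2 t = sig t ` Ssp 1 (2+t)"
  by (simp add: hsp_def)

lemma sig_s: "mdeg \<nu> = 1 \<Longrightarrow> shiftj \<nu> (sig (Suc t) v) = sig t (shiftj \<nu> v)"
  using sig_shift[of \<nu> 1 t v] by simp

lemma mk_zero: "mk3 0 = 0" "mk2 0 0 0 = 0" "mk1 0 0 0 = 0" "mk0 0 = 0"
  by (rule form_eqI; simp)+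

lemma mk2_inj: "mk2 a b c = mk2 a' b' c' \<Longrightarrow> a = a' \<and> b = b' \<and> c = c'"
  by (metis comp_mk(5,6,7))

lemma mk1_inj: "mk1 a b c = mk1 a' b' c' \<Longrightarrow> a = a' \<and> b = b' \<and> c = c'"
  by (metis comp_mk(2,3,4))

lemma dd_zero: "s0 (s1 u2 - s2 u1) - s1 (s0 u2 - s2 u0) + s2 (s0 u1 - s1 u0) = 0"
  by (simp add: shift_diff shift_shift)

lemma sig_unit: "s0 (sig (Suc t) v) = sig t (s0 v)" "s1 (sig (Suc t) v) = sig t (s1 v)"
   "s2 (sig (Suc t) v) = sig t (s2 v)"
  by (rule sig_s; simp)+

lemma compat_lemma:
  assumes "2 \<le> t" and u: "u0 \<in> Ssp 1 (Suc (2+t))" "u1 \<in> Ssp 1 (Suc (2+t))" "u2 \<in> Ssp 1 (Suc (2+t))"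
    and w: "s0 w = sig (Suc t) u0" "s1 w = sig (Suc t) u1" "s2 w = sig (Suc t) u2"
  shows "s1 u0 = s0 u1" "s2 u0 = s0 u2" "s2 u1 = s1 u2"
proof -
  have sh: "shiftj \<nu> x \<in> Ssp 1 (2+t)" if "x \<in> Ssp 1 (Suc (2+t))" "mdeg \<nu> = 1" for x \<nu>
    using shift1_Ssp[of x 1 "2+t" \<nu>] that by blast
  have s10: "s1 u0 \<in> Ssp 1 (2+t)" "s0 u1 \<in> Ssp 1 (2+t)" "s2 u0 \<in> Ssp 1 (2+t)"
    "s0 u2 \<in> Ssp 1 (2+t)" "s2 u1 \<in> Ssp 1 (2+t)" "s1 u2 \<in> Ssp 1 (2+t)"
    apply (rule sh[OF u(1)], simp) apply (rule sh[OF u(2)], simp) apply (rule sh[OF u(1)], simp)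
    apply (rule sh[OF u(3)], simp) apply (rule sh[OF u(2)], simp) apply (rule sh[OF u(3)], simp)
    done
  have "sig t (s1 u0) = s1 (sig (Suc t) u0)" by (simp only: sig_unit)
  also have "\<dots> = s1 (s0 w)" by (simp only: w)
  also have "\<dots> = s0 (s1 w)" by (rule shift_comm)
  also have "\<dots> = sig t (s0 u1)" by (simp only: w sig_unit)
  finally show "s1 u0 = s0 u1" by (rule sig_inj[OF assms(1) s10(1) s10(2)])
  have "sig t (s2 u0) = s2 (sig (Suc t) u0)" by (simp only: sig_unit)
  also have "\<dots> = s2 (s0 w)" by (simp only: w)
  also have "\<dots> = s0 (s2 w)" by (rule shift_comm)
  also have "\<dots> = sig t (s0 u2)" by (simp only: w sig_unit)
  finally show "s2 u0 = s0 u2" by (rule sig_inj[OF assms(1) s10(3) s10(4)])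
  have "sig t (s2 u1) = s2 (sig (Suc t) u1)" by (simp only: sig_unit)
  also have "\<dots> = s2 (s1 w)" by (simp only: w)
  also have "\<dots> = s1 (s2 w)" by (rule shift_comm)
  also have "\<dots> = sig t (s1 u2)" by (simp only: w sig_unit)
  finally show "s2 u1 = s1 u2" by (rule sig_inj[OF assms(1) s10(5) s10(6)])
qed


lemma zero_gS1: "(0::jet) \<in> gS 1"
proof -
  have "(0::jet) = (\<lambda>x. 0 * e3 x)" by (rule ext) simp
  then show ?thesis unfolding gS1_char by blast
qed

lemma sig_s3: "mdeg \<nu> = 1 \<Longrightarrow> shiftj \<nu> (sig 3 u) = sig 2 (shiftj \<nu> u)"
  using sig_s[of \<nu> 2 u] by simp

lemma sig_s2: "mdeg \<nu> = 1 \<Longrightarrow> shiftj \<nu> (sig 2 u) = sig 1 (shiftj \<nu> u)"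
  using sig_s[of \<nu> 1 u] by simp

lemma h3_prol: "hsp Phi0 1 2 3 = prol 3 2 (hsp Phi0 1 2 2) 1"
proof (intro set_eqI iffI)
  fix w assume "w \<in> hsp Phi0 1 2 3"
  then obtain u where u: "u \<in> Ssp 1 5" "w = sig 3 u" unfolding hsp_eq by auto
  have "w \<in> Ssp 3 (2 + 1)" using sig_Ssp[of u 3] u by simp
  moreover have "shiftj \<nu> w \<in> hsp Phi0 1 2 2" if "mdeg \<nu> = 1" for \<nu>
  proof -
    have "shiftj \<nu> u \<in> Ssp 1 4" using shift1_Ssp[of u 1 4 \<nu>] u(1) that by simp
    then show ?thesis unfolding hsp_eq u(2) sig_s3[OF that] by simp
  qed
  ultimately show "w \<in> prol 3 2 (hsp Phi0 1 2 2) 1" unfolding prol_def by blast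
next
  fix w assume "w \<in> prol 3 2 (hsp Phi0 1 2 2) 1"
  then have w: "w \<in> Ssp 3 3" "\<And>\<nu>. mdeg \<nu> = 1 \<Longrightarrow> shiftj \<nu> w \<in> sig 2 ` Ssp 1 4"
    unfolding prol_def hsp_eq by auto
  obtain u0 where u0: "u0 \<in> Ssp 1 4" "s0 w = sig 2 u0" using w(2)[of "(1,0,0)"] by auto
  obtain u1 where u1: "u1 \<in> Ssp 1 4" "s1 w = sig 2 u1" using w(2)[of "(0,1,0)"] by auto
  obtain u2 where u2: "u2 \<in> Ssp 1 4" "s2 w = sig 2 u2" using w(2)[of "(0,0,1)"] by auto
  have sh: "shiftj \<nu> x \<in> Ssp 1 3" if "x \<in> Ssp 1 4" "mdeg \<nu> = 1" for x \<nu>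
    using shift1_Ssp[of x 1 3 \<nu>] that by simp
  have ss: "s1 u0 \<in> Ssp 1 3" "s0 u1 \<in> Ssp 1 3" "s2 u0 \<in> Ssp 1 3"
    "s0 u2 \<in> Ssp 1 3" "s2 u1 \<in> Ssp 1 3" "s1 u2 \<in> Ssp 1 3"
    apply (rule sh[OF u0(1)], simp) apply (rule sh[OF u1(1)], simp) apply (rule sh[OF u0(1)], simp)
    apply (rule sh[OF u2(1)], simp) apply (rule sh[OF u1(1)], simp) apply (rule sh[OF u2(1)], simp)
    done
  have sig_ker1: "x \<in> gS 1" if "x \<in> Ssp 1 3" "sig 1 x = 0" for x
    using sig_ker[of x 1] that by simp
  have d: "s0 u1 - s1 u0 \<in> gS 1" "s0 u2 - s2 u0 \<in> gS 1" "s1 u2 - s2 u1 \<in> gS 1"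
  proof -
    have "sig 1 (s0 u1 - s1 u0) = s0 (sig 2 u1) - s1 (sig 2 u0)"
      by (simp add: sig_diff sig_s2)
    also have "\<dots> = 0" by (simp add: u0(2)[symmetric] u1(2)[symmetric] shift_shift)
    finally show "s0 u1 - s1 u0 \<in> gS 1"
      by (rule sig_ker1[OF Ssp_diff[OF ss(2) ss(1)]])
    have "sig 1 (s0 u2 - s2 u0) = s0 (sig 2 u2) - s2 (sig 2 u0)"
      by (simp add: sig_diff sig_s2)
    also have "\<dots> = 0" by (simp add: u0(2)[symmetric] u2(2)[symmetric] shift_shift)
    finally show "s0 u2 - s2 u0 \<in> gS 1"
      by (rule sig_ker1[OF Ssp_diff[OF ss(4) ss(3)]])
    have "sig 1 (s1 u2 - s2 u1) = s1 (sig 2 u2) - s2 (sig 2 u1)"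
      by (simp add: sig_diff sig_s2)
    also have "\<dots> = 0" by (simp add: u1(2)[symmetric] u2(2)[symmetric] shift_shift)
    finally show "s1 u2 - s2 u1 \<in> gS 1"
      by (rule sig_ker1[OF Ssp_diff[OF ss(6) ss(5)]])
  qed
  define \<omega> where "\<omega> = mk2 (s0 u1 - s1 u0) (s0 u2 - s2 u0) (s1 u2 - s2 u1)"
  have "\<omega> \<in> Forms 2 (gS 1)" unfolding \<omega>_def Forms2_iff using d by blast
  moreover have "(0::form) \<in> Forms 2 (gS 1)" by (rule zero_Forms) (rule zero_gS1)
  moreover have "spencer \<omega> = spencer 0"
    unfolding \<omega>_def spencer_mk2 using dd_zero[of u2 u1 u0] by (simp add: mk_zero)
  ultimately have "\<omega> = 0" using bij_g unfolding bij_betw_def inj_on_def by blast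
  then have "s0 u1 - s1 u0 = 0" "s0 u2 - s2 u0 = 0" "s1 u2 - s2 u1 = 0"
    unfolding \<omega>_def using mk2_inj mk_zero(2) by metis+
  then have c: "s1 u0 = s0 u1" "s2 u0 = s0 u2" "s2 u1 = s1 u2" by simp_all
  obtain U where U: "U \<in> Ssp 1 (Suc 4)" "s0 U = u0" "s1 U = u1" "s2 U = u2"
    using integrate[OF u0(1) u1(1) u2(1) c] by blast
  have "w = sig 3 U"
  proof (rule det_by_shifts[of _ 3 2])
    show "w \<in> Ssp 3 (Suc 2)" using w(1) by simp
    show "sig 3 U \<in> Ssp 3 (Suc 2)" using sig_Ssp[of U 3] U(1) by simp
    show "s0 w = s0 (sig 3 U)" by (simp del: One_nat_def add: sig_s3 U u0)
    show "s1 w = s1 (sig 3 U)" by (simp del: One_nat_def add: sig_s3 U u1)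
    show "s2 w = s2 (sig 3 U)" by (simp del: One_nat_def add: sig_s3 U u2)
  qed
  then show "w \<in> hsp Phi0 1 2 3" unfolding hsp_eq using U(1) by simp
qed


lemma gS_sig0: assumes "x \<in> gS t" shows "sig t x = 0"
proof (rule jet_eqI)
  fix \<nu> :: mi and \<tau> :: nat
  have e: "\<And>\<nu>. mdeg \<nu> = t \<Longrightarrow> eqs x \<nu>" using assms unfolding gS_def by blast
  show "sig t x (\<nu>,\<tau>) = 0 (\<nu>,\<tau>)"
  proof (cases "mdeg \<nu> = t")
    case True
    then have "eqs x \<nu>" by (rule e)
    then have "\<forall>\<tau><3. ph x \<nu> \<tau> = 0" using ph_eqs by blast
    then show ?thesis using True by (cases "\<tau> < 3") (auto simp: ph_def)
  qed simp
qed

lemma plus_zero3[simp]: "(\<mu>::mi) + (0,0,0) = \<mu>"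
  by (cases \<mu>) simp

lemma prol0: "G \<subseteq> Ssp m q \<Longrightarrow> prol m q G 0 = G"
proof -
  assume G: "G \<subseteq> Ssp m q"
  have s: "shiftj \<nu> v = v" if "mdeg \<nu> = 0" for \<nu> and v :: jet
  proof -
    have "\<nu> = 0" using that by (cases \<nu>) simp
    then show ?thesis by (intro jet_eqI) simp
  qed
  show ?thesis unfolding prol_def using G s by auto
qed

lemma hsp_Ssp: "hsp Phi0 1 2 t \<subseteq> Ssp 3 t"
  unfolding hsp_eq using sig_Ssp by auto

abbreviation "E4 \<equiv> ind {(4,0,0),(2,1,1)}"

lemma s0E4: "s0 E4 = e3"
proof (rule jet_eqI)
  fix \<mu> :: mi and c :: nat
  obtain a b d where "\<mu> = (a,b,d)" by (cases \<mu>)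
  then show "s0 E4 (\<mu>,c) = e3 (\<mu>,c)" by auto
qed

lemma E4_Ssp: "E4 \<in> Ssp 1 4"
  by (rule SspI) auto

lemma not_acyc_h2: "\<not> acyclic 2 3 2 (hsp Phi0 1 2 2)"
proof
  assume "acyclic 2 3 2 (hsp Phi0 1 2 2)"
  then have H: "\<forall>r j. 1 \<le> j \<and> j \<le> 2 \<longrightarrow> delta_exact_at j (prol 3 2 (hsp Phi0 1 2 2) (Suc r)) (prol 3 2 (hsp Phi0 1 2 2) r)"
    unfolding acyclic_def by blast
  have "delta_exact_at 2 (prol 3 2 (hsp Phi0 1 2 2) (Suc 0)) (prol 3 2 (hsp Phi0 1 2 2) 0)"
    by (rule H[rule_format]) simp
  then have ex: "delta_exact_at 2 (hsp Phi0 1 2 3) (hsp Phi0 1 2 2)"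
    using h3_prol prol0[OF hsp_Ssp] by simp
  define \<omega> where "\<omega> = mk2 0 0 (sig 2 E4)"
  have h0: "(0::jet) \<in> hsp Phi0 1 2 2" unfolding hsp_eq by (rule image_eqI[of _ _ 0]) simp_all
  have hE: "sig 2 E4 \<in> hsp Phi0 1 2 2" unfolding hsp_eq using E4_Ssp by simp
  have wF: "\<omega> \<in> Forms 2 (hsp Phi0 1 2 2)" unfolding \<omega>_def Forms2_iff using h0 hE by blast
  have "s0 (sig 2 E4) = 0" using sig_s2[of "(1,0,0)" E4] s0E4 gS_sig0[OF e3_g1] by simp
  then have "spencer \<omega> = 0" unfolding \<omega>_def spencer_mk2 by (simp add: mk_zero)
  then obtain \<theta> where th: "\<theta> \<in> Forms 1 (hsp Phi0 1 2 3)" "spencer \<theta> = \<omega>"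
    using ex wF unfolding delta_exact_at_def by force
  then obtain t0 t1 t2 where t: "t0 \<in> Ssp 1 5" "t1 \<in> Ssp 1 5" "t2 \<in> Ssp 1 5"
    "\<theta> = mk1 (sig 3 t0) (sig 3 t1) (sig 3 t2)"
    unfolding Forms1_iff hsp_eq by auto
  have sh: "shiftj \<nu> x \<in> Ssp 1 4" if "x \<in> Ssp 1 5" "mdeg \<nu> = 1" for x \<nu>
    using shift1_Ssp[of x 1 4 \<nu>] that by simp
  have ss: "s1 t0 \<in> Ssp 1 4" "s0 t1 \<in> Ssp 1 4" "s2 t0 \<in> Ssp 1 4"
    "s0 t2 \<in> Ssp 1 4" "s2 t1 \<in> Ssp 1 4" "s1 t2 \<in> Ssp 1 4"
    apply (rule sh[OF t(1)], simp) apply (rule sh[OF t(2)], simp) apply (rule sh[OF t(1)], simp)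
    apply (rule sh[OF t(3)], simp) apply (rule sh[OF t(2)], simp) apply (rule sh[OF t(3)], simp)
    done
  have "spencer \<theta> = mk2 (sig 2 (s0 t1 - s1 t0)) (sig 2 (s0 t2 - s2 t0)) (sig 2 (s1 t2 - s2 t1))"
    unfolding t(4) spencer_mk1 by (simp del: One_nat_def add: sig_diff sig_s3)
  then have "mk2 (sig 2 (s0 t1 - s1 t0)) (sig 2 (s0 t2 - s2 t0)) (sig 2 (s1 t2 - s2 t1)) = mk2 0 0 (sig 2 E4)"
    using th(2) unfolding \<omega>_def by simp
  then have e0: "sig 2 (s0 t1 - s1 t0) = 0 \<and> sig 2 (s0 t2 - s2 t0) = 0 \<and> sig 2 (s1 t2 - s2 t1) = sig 2 E4"
    by (rule mk2_inj)
  then have e: "sig 2 (s0 t1 - s1 t0) = sig 2 0" "sig 2 (s0 t2 - s2 t0) = sig 2 0"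
     "sig 2 (s1 t2 - s2 t1) = sig 2 E4" by simp_all
  have sig_inj2: "x = y" if "x \<in> Ssp 1 4" "y \<in> Ssp 1 4" "sig 2 x = sig 2 y" for x y
    using sig_inj[of 2 x y] that by simp
  have "s0 t1 - s1 t0 = 0" by (rule sig_inj2[OF Ssp_diff[OF ss(2) ss(1)] Ssp_0 e(1)])
  moreover have "s0 t2 - s2 t0 = 0" by (rule sig_inj2[OF Ssp_diff[OF ss(4) ss(3)] Ssp_0 e(2)])
  moreover have "s1 t2 - s2 t1 = E4" by (rule sig_inj2[OF Ssp_diff[OF ss(6) ss(5)] E4_Ssp e(3)])
  ultimately have c: "s0 t1 = s1 t0" "s0 t2 = s2 t0" "s1 t2 - s2 t1 = E4" by simp_all
  have "s0 E4 = s0 (s1 t2) - s0 (s2 t1)" by (simp only: c(3)[symmetric] shift_diff)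
  also have "\<dots> = s1 (s0 t2) - s2 (s0 t1)" by (simp only: shift_comm)
  also have "\<dots> = s1 (s2 t0) - s2 (s1 t0)" by (simp only: c)
  also have "\<dots> = 0" by (simp add: shift_shift)
  finally have "e3 = 0" using s0E4 by simp
  then have "e3 ((3,0,0),0) = 0" by simp
  then show False by simp
qed


lemma prol_shift: "w \<in> prol m q G (Suc r) \<Longrightarrow> mdeg e = 1 \<Longrightarrow> shiftj e w \<in> prol m q G r"
proof -
  assume w: "w \<in> prol m q G (Suc r)" and e: "mdeg e = 1"
  then have w1: "w \<in> Ssp m (Suc (q + r))" "\<And>\<nu>. mdeg \<nu> = Suc r \<Longrightarrow> shiftj \<nu> w \<in> G"
    unfolding prol_def by auto
  have "shiftj e w \<in> Ssp m (q + r)" using shift1_Ssp[OF w1(1) e] .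
  moreover have "shiftj \<nu> (shiftj e w) \<in> G" if "mdeg \<nu> = r" for \<nu>
    using w1(2)[of "\<nu> + e"] that e by (simp add: shift_shift)
  ultimately show ?thesis unfolding prol_def by blast
qed

lemma prol_h3: "prol 3 3 (hsp Phi0 1 2 3) r = sig (3+r) ` Ssp 1 (5+r)"
proof (induction r)
  case 0
  have "prol 3 3 (hsp Phi0 1 2 3) 0 = hsp Phi0 1 2 3" by (rule prol0[OF hsp_Ssp])
  also have "\<dots> = sig 3 ` Ssp 1 5" unfolding hsp_eq by simp
  finally show ?case by simp
next
  case (Suc r)
  show ?case
  proof (intro set_eqI iffI)
    fix w assume w: "w \<in> prol 3 3 (hsp Phi0 1 2 3) (Suc r)"
    have "s0 w \<in> sig (3+r) ` Ssp 1 (5+r)" using prol_shift[OF w, of "(1,0,0)"] Suc.IH by simp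
    then obtain u0 where u0: "u0 \<in> Ssp 1 (5+r)" "s0 w = sig (3+r) u0" by auto
    have "s1 w \<in> sig (3+r) ` Ssp 1 (5+r)" using prol_shift[OF w, of "(0,1,0)"] Suc.IH by simp
    then obtain u1 where u1: "u1 \<in> Ssp 1 (5+r)" "s1 w = sig (3+r) u1" by auto
    have "s2 w \<in> sig (3+r) ` Ssp 1 (5+r)" using prol_shift[OF w, of "(0,0,1)"] Suc.IH by simp
    then obtain u2 where u2: "u2 \<in> Ssp 1 (5+r)" "s2 w = sig (3+r) u2" by auto
    have e1: "Suc (2 + (2 + r)) = 5 + r" "Suc (2 + r) = 3 + r" by simp_all
    have c: "s1 u0 = s0 u1" "s2 u0 = s0 u2" "s2 u1 = s1 u2"
      using compat_lemma[of "2+r" u0 u1 u2 w, unfolded e1, OF _ u0(1) u1(1) u2(1) u0(2) u1(2) u2(2)]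
      by simp_all
    obtain U where U: "U \<in> Ssp 1 (Suc (5+r))" "s0 U = u0" "s1 U = u1" "s2 U = u2"
      using integrate[OF u0(1) u1(1) u2(1) c] by blast
    have "w = sig (Suc (3+r)) U"
    proof (rule det_by_shifts[of _ 3 "3+r"])
      show "w \<in> Ssp 3 (Suc (3+r))" using w unfolding prol_def by simp
      show "sig (Suc (3+r)) U \<in> Ssp 3 (Suc (3+r))" using sig_Ssp[of U "Suc (3+r)"] U(1) by simp
      show "s0 w = s0 (sig (Suc (3+r)) U)" by (simp only: sig_unit U u0)
      show "s1 w = s1 (sig (Suc (3+r)) U)" by (simp only: sig_unit U u1)
      show "s2 w = s2 (sig (Suc (3+r)) U)" by (simp only: sig_unit U u2)
    qed
    then show "w \<in> sig (3 + Suc r) ` Ssp 1 (5 + Suc r)" using U(1) by simp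
  next
    fix w assume "w \<in> sig (3 + Suc r) ` Ssp 1 (5 + Suc r)"
    then obtain u where u: "u \<in> Ssp 1 (5 + Suc r)" "w = sig (3 + Suc r) u" by auto
    have "w \<in> Ssp 3 (3 + Suc r)" using sig_Ssp[of u "3 + Suc r"] u by simp
    moreover have "shiftj \<nu> w \<in> hsp Phi0 1 2 3" if "mdeg \<nu> = Suc r" for \<nu>
    proof -
      have "shiftj \<nu> w = sig 3 (shiftj \<nu> u)" using sig_shift[OF that, of 3 u] u(2) by simp
      moreover have "shiftj \<nu> u \<in> Ssp 1 5" using shift_Ssp[of u 1 5 "Suc r" \<nu>] u(1) that by simp
      ultimately show ?thesis unfolding hsp_eq by simp
    qed
    ultimately show "w \<in> prol 3 3 (hsp Phi0 1 2 3) (Suc r)" unfolding prol_def by blast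
  qed
qed


lemma sig_inj': "2 \<le> t \<Longrightarrow> x \<in> Ssp 1 (Suc (Suc t)) \<Longrightarrow> y \<in> Ssp 1 (Suc (Suc t)) \<Longrightarrow> sig t x = sig t y \<Longrightarrow> x = y"
  using sig_inj[of t x y] by simp

lemma sh_units: "x \<in> Ssp m (Suc k) \<Longrightarrow> s0 x \<in> Ssp m k \<and> s1 x \<in> Ssp m k \<and> s2 x \<in> Ssp m k"
  using shift1_Ssp[of x m k] by simp

lemma exact1_h: assumes t: "2 \<le> t"
  shows "delta_exact_at 1 (sig (Suc (Suc t)) ` Ssp 1 (Suc (Suc (Suc (Suc t))))) (sig (Suc t) ` Ssp 1 (Suc (Suc (Suc t))))"
  unfolding delta_exact_at_def
proof (intro ballI impI)
  fix \<omega> assume "\<omega> \<in> Forms 1 (sig (Suc t) ` Ssp 1 (Suc (Suc (Suc t))))" and sp: "spencer \<omega> = 0"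
  then obtain u0 u1 u2 where u: "u0 \<in> Ssp 1 (Suc (Suc (Suc t)))" "u1 \<in> Ssp 1 (Suc (Suc (Suc t)))"
    "u2 \<in> Ssp 1 (Suc (Suc (Suc t)))" and w: "\<omega> = mk1 (sig (Suc t) u0) (sig (Suc t) u1) (sig (Suc t) u2)"
    unfolding Forms1_iff by blast
  have "mk2 (sig t (s0 u1 - s1 u0)) (sig t (s0 u2 - s2 u0)) (sig t (s1 u2 - s2 u1)) = mk2 0 0 0"
    using sp unfolding w spencer_mk1 by (simp only: sig_unit sig_diff mk_zero)
  then have e: "sig t (s0 u1 - s1 u0) = sig t 0" "sig t (s0 u2 - s2 u0) = sig t 0" "sig t (s1 u2 - s2 u1) = sig t 0"
    using mk2_inj by auto
  have sh: "s0 u0 \<in> Ssp 1 (Suc (Suc t)) \<and> s1 u0 \<in> Ssp 1 (Suc (Suc t)) \<and> s2 u0 \<in> Ssp 1 (Suc (Suc t))"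
    "s0 u1 \<in> Ssp 1 (Suc (Suc t)) \<and> s1 u1 \<in> Ssp 1 (Suc (Suc t)) \<and> s2 u1 \<in> Ssp 1 (Suc (Suc t))"
    "s0 u2 \<in> Ssp 1 (Suc (Suc t)) \<and> s1 u2 \<in> Ssp 1 (Suc (Suc t)) \<and> s2 u2 \<in> Ssp 1 (Suc (Suc t))"
    using sh_units u by blast+
  have "s0 u1 - s1 u0 = 0" by (rule sig_inj'[OF t _ Ssp_0 e(1)]) (use sh in \<open>simp add: Ssp_diff\<close>)
  moreover have "s0 u2 - s2 u0 = 0" by (rule sig_inj'[OF t _ Ssp_0 e(2)]) (use sh in \<open>simp add: Ssp_diff\<close>)
  moreover have "s1 u2 - s2 u1 = 0" by (rule sig_inj'[OF t _ Ssp_0 e(3)]) (use sh in \<open>simp add: Ssp_diff\<close>)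
  ultimately have c: "s1 u0 = s0 u1" "s2 u0 = s0 u2" "s2 u1 = s1 u2" by simp_all
  obtain U where U: "U \<in> Ssp 1 (Suc (Suc (Suc (Suc t))))" "s0 U = u0" "s1 U = u1" "s2 U = u2"
    using integrate[OF u c] by blast
  define \<theta> where "\<theta> = mk0 (sig (Suc (Suc t)) U)"
  have "\<theta> \<in> Forms (1 - 1) (sig (Suc (Suc t)) ` Ssp 1 (Suc (Suc (Suc (Suc t)))))"
    unfolding \<theta>_def using U(1) Forms0_iff by auto
  moreover have "spencer \<theta> = \<omega>"
    unfolding \<theta>_def w spencer_mk0 by (simp only: sig_unit U)
  ultimately show "\<exists>\<theta>\<in>Forms (1 - 1) (sig (Suc (Suc t)) ` Ssp 1 (Suc (Suc (Suc (Suc t))))). spencer \<theta> = \<omega>"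
    by blast
qed


lemma exact2_h: assumes t: "2 \<le> t"
  shows "delta_exact_at 2 (sig (Suc (Suc t)) ` Ssp 1 (Suc (Suc (Suc (Suc t))))) (sig (Suc t) ` Ssp 1 (Suc (Suc (Suc t))))"
  unfolding delta_exact_at_def
proof (intro ballI impI)
  fix \<omega> assume "\<omega> \<in> Forms 2 (sig (Suc t) ` Ssp 1 (Suc (Suc (Suc t))))" and sp: "spencer \<omega> = 0"
  then obtain a0 a1 a2 where a: "a0 \<in> Ssp 1 (Suc (Suc (Suc t)))" "a1 \<in> Ssp 1 (Suc (Suc (Suc t)))"
    "a2 \<in> Ssp 1 (Suc (Suc (Suc t)))" and w: "\<omega> = mk2 (sig (Suc t) a0) (sig (Suc t) a1) (sig (Suc t) a2)"
    unfolding Forms2_iff by blast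
  have "mk3 (sig t (s0 a2 - s1 a1 + s2 a0)) = mk3 0"
    using sp unfolding w spencer_mk2 by (simp only: sig_unit sig_diff sig_add mk_zero)
  then have e: "sig t (s0 a2 - s1 a1 + s2 a0) = sig t 0" using mk3_inj by simp
  have sh: "s0 a0 \<in> Ssp 1 (Suc (Suc t)) \<and> s1 a0 \<in> Ssp 1 (Suc (Suc t)) \<and> s2 a0 \<in> Ssp 1 (Suc (Suc t))"
    "s0 a1 \<in> Ssp 1 (Suc (Suc t)) \<and> s1 a1 \<in> Ssp 1 (Suc (Suc t)) \<and> s2 a1 \<in> Ssp 1 (Suc (Suc t))"
    "s0 a2 \<in> Ssp 1 (Suc (Suc t)) \<and> s1 a2 \<in> Ssp 1 (Suc (Suc t)) \<and> s2 a2 \<in> Ssp 1 (Suc (Suc t))"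
    using sh_units a by blast+
  have cl: "s0 a2 - s1 a1 + s2 a0 = 0"
    by (rule sig_inj'[OF t _ Ssp_0 e]) (use sh in \<open>simp add: Ssp_diff Ssp_add\<close>)
  define f where "f = a2 - s1 (I0 a1) + s2 (I0 a0)"
  have sI: "s1 (I0 a1) \<in> Ssp 1 (Suc (Suc (Suc t)))" "s2 (I0 a0) \<in> Ssp 1 (Suc (Suc (Suc t)))"
    using sh_units[OF I0_Ssp[OF a(2)]] sh_units[OF I0_Ssp[OF a(1)]] by blast+
  have fS: "f \<in> Ssp 1 (Suc (Suc (Suc t)))" unfolding f_def using a(3) sI by (simp add: Ssp_diff Ssp_add)
  have "s0 f = s0 a2 - s1 (s0 (I0 a1)) + s2 (s0 (I0 a0))"
    unfolding f_def by (simp only: shift_diff shift_add shift_comm[of "(1,0,0)"])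
  also have "\<dots> = 0" using cl by (simp only: s0_I0)
  finally have f0: "s0 f = 0" .
  define \<theta>0 :: jet where "\<theta>0 = 0"
  define \<theta>1 where "\<theta>1 = I0 a0"
  define \<theta>2 where "\<theta>2 = I0 a1 + J1 f"
  have th: "\<theta>0 \<in> Ssp 1 (Suc (Suc (Suc (Suc t))))" "\<theta>1 \<in> Ssp 1 (Suc (Suc (Suc (Suc t))))"
    "\<theta>2 \<in> Ssp 1 (Suc (Suc (Suc (Suc t))))"
    unfolding \<theta>0_def \<theta>1_def \<theta>2_def using I0_Ssp[OF a(1)] I0_Ssp[OF a(2)] J1_Ssp[OF fS]
    by (simp_all add: Ssp_add)
  have q1: "s0 \<theta>1 - s1 \<theta>0 = a0" unfolding \<theta>0_def \<theta>1_def by (simp del: One_nat_def add: s0_I0)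
  have q2: "s0 \<theta>2 - s2 \<theta>0 = a1" unfolding \<theta>0_def \<theta>2_def by (simp del: One_nat_def add: shift_add s0_I0 J1_props(1)[OF f0])
  have q3: "s1 \<theta>2 - s2 \<theta>1 = a2" unfolding \<theta>1_def \<theta>2_def
    by (simp only: shift_add J1_props(2)[OF f0]) (simp add: f_def)
  define \<theta> where "\<theta> = mk1 (sig (Suc (Suc t)) \<theta>0) (sig (Suc (Suc t)) \<theta>1) (sig (Suc (Suc t)) \<theta>2)"
  have "\<theta> \<in> Forms (2 - 1) (sig (Suc (Suc t)) ` Ssp 1 (Suc (Suc (Suc (Suc t)))))"
    unfolding \<theta>_def using th Forms1_iff by auto
  moreover have "spencer \<theta> = \<omega>"
    unfolding \<theta>_def w spencer_mk1 by (simp only: sig_unit sig_diff[symmetric] q1 q2 q3)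
  ultimately show "\<exists>\<theta>\<in>Forms (2 - 1) (sig (Suc (Suc t)) ` Ssp 1 (Suc (Suc (Suc (Suc t))))). spencer \<theta> = \<omega>"
    by blast
qed


lemma acyc_h3: "acyclic 2 3 3 (hsp Phi0 1 2 3)"
  unfolding acyclic_def
proof (intro allI impI)
  fix r j :: nat assume j: "1 \<le> j \<and> j \<le> 2"
  have e: "sig (3 + Suc r) ` Ssp 1 (5 + Suc r) = sig (Suc (Suc (2 + r))) ` Ssp 1 (Suc (Suc (Suc (Suc (2 + r)))))"
    "sig (3 + r) ` Ssp 1 (5 + r) = sig (Suc (2 + r)) ` Ssp 1 (Suc (Suc (Suc (2 + r))))"
    by (simp_all add: numeral_eq_Suc del: two_Suc)
  have t: "2 \<le> 2 + r" by simp
  have "j = 1 \<or> j = 2" using j by arith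
  then show "delta_exact_at j (prol 3 3 (hsp Phi0 1 2 3) (Suc r)) (prol 3 3 (hsp Phi0 1 2 3) r)"
    unfolding prol_h3 e using exact1_h[OF t] exact2_h[OF t] by blast
qed

theorem mainTheorem8:
  fixes Phi Psi Omega :: "D list list"
  defines "Phi \<equiv> [[opP], [opQ], [opR]]"
      and "Psi \<equiv> [[0, - opR, opQ], [opR, 0, - opP], [- opQ, opP, 0]]"
      and "Omega \<equiv> [[opP, opQ, opR]]"
  shows
    "formally_integrable Phi 1 2
     \<and> \<not> involutive 1 2 (symb Phi 1 2 0)
     \<and> \<not> involutive 1 3 (symb Phi 1 2 1)
     \<and> symb Phi 1 2 2 = {0}
     \<and> fdim (symb Phi 1 2 1) = 1
     \<and> bij_betw spencer (Forms 2 (symb Phi 1 2 1)) (Forms 3 (symb Phi 1 2 0))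
     \<and> fdim (Forms 2 (symb Phi 1 2 1)) = 3
     \<and> fdim (Forms 3 (symb Phi 1 2 0)) = 3
     \<and> acyclic 2 1 3 (symb Phi 1 2 1)
     \<and> generates_cc Psi Phi 1
     \<and> generates_cc Omega Psi 3
     \<and> formally_exact [1, 3, 3, 1, 0] [Phi, Psi, Omega, []]
     \<and> \<not> acyclic 2 3 2 (hsp Phi 1 2 2)
     \<and> hsp Phi 1 2 3 = prol 3 2 (hsp Phi 1 2 2) 1
     \<and> acyclic 2 3 3 (hsp Phi 1 2 3)"
  unfolding assms symb_gS
  using FI not_inv_g0 not_inv_g1 gS_zero[OF order_refl] fdim_g1 bij_g fdim_F2g1 fdim_F3g0 acyc_g1
    gcc1 gcc2 fexact not_acyc_h2 h3_prol acyc_h3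
  by blast



end
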